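(* Assume product-form weights $w^t_i=u(i)v(m_t)$. For each $t\ge1$ let $c_t\in[1,2]$ and set $\beta^c_t:=\beta^*_t/c_t$, with $\beta^c_0=\beta^*_0\in(0,\infty)$. Then for every $x_{1:n}\in\mathcal X^n$ ($n\ge1$), $$R^{\vec\beta^c}_S(x_{1:n}) \le R^{\vec\beta^*}_S(x_{1:n}) + (m-1)\ln2 ,$$ and hence $$R^{\vec\beta^c}_S(x_{1:n}) \le \mathrm{CL}_w(\mathcal A) - (m-1)\ln m + \sum_{j\in\mathcal A}\tfrac12\ln n_j - \tfrac12\ln n + \tfrac32 m\ln\ln\frac{2n}{m} + 2.33m + 0.86 + (m-1)\ln 2.$$
   Context: Let $\mathcal X$ be a finite base alphabet. For $x_{1:n}\in\mathcal X^n$, $n_i$ is the number of occurrences of $i$, $\mathcal A=\{x_1,\dots,x_n\}$, $m=|\mathcal A|$; for $0\le t\le n$, $\mathcal A_t=\{x_1,\dots,x_t\}$ ($\mathcal A_0=\emptyset$), $m_t=|\mathcal A_t|$, $n^t_i$ the count of $i$ in $x_{1:t}$. Product-form weights: $u:\mathcal X\to(0,\infty)$, $v:\{0,1,\dots\}\to(0,\infty)$ with $w^t_i:=u(i)v(m_t)$ and $\sum_{k\in\mathcal X\setminus\mathcal A_t}w^t_k\le1$. For a sequence $\vec\beta=(\beta_0,\beta_1,\dots)$ of positive reals, $S^{\vec\beta}(x_{t+1}=i\mid x_{1:t})=n^t_i/(t+\beta_t)$ if $n^t_i>0$ and $\beta_t w^t_i/(t+\beta_t)$ if $n^t_i=0$,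 $S^{\vec\beta}(x_{1:n})=\prod_{t=0}^{n-1}S^{\vec\beta}(x_{t+1}\mid x_{1:t})$, and $R^{\vec\beta}_S(x_{1:n}):=\ln\big(n^{-n}\prod_{j\in\mathcal A}n_j^{n_j}\big)-\ln S^{\vec\beta}(x_{1:n})$. $\vec\beta^*$ is given by $\beta^*_t:=m_t/\ln\frac{t+1}{m_t}$ for $t\ge1$ and any $\beta^*_0\in(0,\infty)$. $\mathrm{CL}_w(\mathcal A):=\sum_{t\in\{0,\dots,n-1\}:\,x_{t+1}\notin\mathcal A_t}\ln(1/w^t_{x_{t+1}})$. Natural logarithms. *)

theory Defs
  imports Complex_Main
begin

text \<open>A sequence x_1..x_n is a list xs of length n; x_(t+1) = xs ! t.
  A_t = set (take t xs), m_t = card A_t, n^t_i = count_list (take t xs) i.\<close>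

definition cnt :: "'a list \<Rightarrow> nat \<Rightarrow> 'a \<Rightarrow> nat" where
  "cnt xs t i = count_list (take t xs) i"

definition m_t :: "'a list \<Rightarrow> nat \<Rightarrow> nat" where
  "m_t xs t = card (set (take t xs))"

definition wt :: "('a \<Rightarrow> real) \<Rightarrow> (nat \<Rightarrow> real) \<Rightarrow> 'a list \<Rightarrow> nat \<Rightarrow> 'a \<Rightarrow> real" where
  "wt u v xs t i = u i * v (m_t xs t)"

definition S_cond :: "(nat \<Rightarrow> real) \<Rightarrow> ('a \<Rightarrow> real) \<Rightarrow> (nat \<Rightarrow> real) \<Rightarrow> 'a list \<Rightarrow> nat \<Rightarrow> 'a \<Rightarrow> real" where
  "S_cond \<beta> u v xs t i =
     (if cnt xs t i > 0 then real (cnt xs t i) / (real t + \<beta> t)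
      else \<beta> t * wt u v xs t i / (real t + \<beta> t))"

definition S_seq :: "(nat \<Rightarrow> real) \<Rightarrow> ('a \<Rightarrow> real) \<Rightarrow> (nat \<Rightarrow> real) \<Rightarrow> 'a list \<Rightarrow> real" where
  "S_seq \<beta> u v xs = (\<Prod>t<length xs. S_cond \<beta> u v xs t (xs ! t))"

definition regret :: "(nat \<Rightarrow> real) \<Rightarrow> ('a \<Rightarrow> real) \<Rightarrow> (nat \<Rightarrow> real) \<Rightarrow> 'a list \<Rightarrow> real" where
  "regret \<beta> u v xs =
     ln ((\<Prod>j\<in>set xs. real (count_list xs j) ^ count_list xs j) / real (length xs) ^ length xs)
     - ln (S_seq \<beta> u v xs)"

definition beta_star :: "real \<Rightarrow> 'a list \<Rightarrow> nat \<Rightarrow> real" where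
  "beta_star b0 xs t =
     (if t = 0 then b0 else real (m_t xs t) / ln (real (t + 1) / real (m_t xs t)))"

definition beta_c :: "real \<Rightarrow> (nat \<Rightarrow> real) \<Rightarrow> 'a list \<Rightarrow> nat \<Rightarrow> real" where
  "beta_c b0 c xs t = (if t = 0 then b0 else beta_star b0 xs t / c t)"

definition CL :: "('a \<Rightarrow> real) \<Rightarrow> (nat \<Rightarrow> real) \<Rightarrow> 'a list \<Rightarrow> real" where
  "CL u v xs = (\<Sum>t\<in>{t. t < length xs \<and> xs ! t \<notin> set (take t xs)}.
                   ln (1 / wt u v xs t (xs ! t)))"

end

theory Submission
  imports Defs "HOL-Analysis.Harmonic_Numbers"
begin


lemma m_t_le: "m_t xs t \<le> t"
proof -
  have "card (set (take t xs)) \<le> length (take t xs)" by (rule card_length)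
  then show ?thesis unfolding m_t_def by simp
qed

lemma m_t_pos: "xs \<noteq> [] \<Longrightarrow> t \<ge> 1 \<Longrightarrow> m_t xs t \<ge> 1"
proof -
  assume a: "xs \<noteq> []" "t \<ge> 1"
  have "take t xs \<noteq> []" using a by (cases xs; cases t) auto
  then show ?thesis unfolding m_t_def by (simp add: Suc_le_eq card_gt_0_iff)
qed

lemma beta_star_pos:
  assumes "xs \<noteq> []" "b0 > 0" shows "beta_star b0 xs t > 0"
proof (cases "t = 0")
  case True then show ?thesis using assms by (simp add: beta_star_def)
next
  case False
  have m1: "m_t xs t \<ge> 1" using m_t_pos[OF assms(1)] False by simp
  have m2: "m_t xs t \<le> t" by (rule m_t_le)
  have "real (m_t xs t) < real (t+1)" using m2 by simp
  then have "real (t+1) / real (m_t xs t) > 1" using m1 by (subst less_divide_eq) auto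
  then have "ln (real (t + 1) / real (m_t xs t)) > 0" by simp
  then show ?thesis using False m1 by (simp add: beta_star_def)
qed

lemma first_occ_card:
  "card {t. t < length xs \<and> xs ! t \<notin> set (take t xs)} = card (set xs)"
proof (induction xs rule: rev_induct)
  case Nil then show ?case by simp
next
  case (snoc x xs)
  let ?A = "\<lambda>ys. {t. t < length ys \<and> ys ! t \<notin> set (take t ys)}"
  have eq: "?A (xs @ [x]) = ?A xs \<union> (if x \<in> set xs then {} else {length xs})"
  proof (rule set_eqI)
    fix t
    show "t \<in> ?A (xs @ [x]) \<longleftrightarrow> t \<in> ?A xs \<union> (if x \<in> set xs then {} else {length xs})"
    proof (cases "t < length xs")
      case True
      then have "(xs @ [x]) ! t = xs ! t" "take t (xs @ [x]) = take t xs"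
        by (simp_all add: nth_append)
      then show ?thesis using True by auto
    next
      case False
      then show ?thesis by (cases "t = length xs") auto
    qed
  qed
  show ?case
  proof (cases "x \<in> set xs")
    case True
    then have "set (xs @ [x]) = set xs" by auto
    moreover have "?A (xs @ [x]) = ?A xs" using eq True by simp
    ultimately show ?thesis using snoc.IH by presburger
  next
    case False
    have nin: "length xs \<notin> ?A xs" by simp
    have fin: "finite (?A xs)" by (rule finite_subset[of _ "{..<length xs}"]) auto
    have "card (?A xs \<union> {length xs}) = Suc (card (?A xs))"
      using card_insert_disjoint[OF fin nin] by simp
    moreover have "card (set (xs @ [x])) = Suc (card (set xs))" using False by simp
    moreover have "?A (xs @ [x]) = ?A xs \<union> {length xs}" using eq False by simp
    ultimately show ?thesis using snoc.IH by presburger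
  qed
qed

lemma S_cond_pos:
  assumes "\<And>i. u i > 0" "\<And>k. v k > 0" "\<beta> t > 0"
  shows "S_cond \<beta> u v xs t i > 0"
  using assms unfolding S_cond_def wt_def
  by (auto intro!: divide_pos_pos mult_pos_pos add_nonneg_pos)

lemma ln_S_seq:
  assumes "\<And>i. u i > 0" "\<And>k. v k > 0" "\<And>t. \<beta> t > 0"
  shows "ln (S_seq \<beta> u v xs) = (\<Sum>t<length xs. ln (S_cond \<beta> u v xs t (xs ! t)))"
  unfolding S_seq_def
proof (rule ln_prod)
  fix t assume "t \<in> {..<length xs}"
  have "0 < S_cond \<beta> u v xs t (xs ! t)" by (rule S_cond_pos) (use assms in auto)
  then show "S_cond \<beta> u v xs t (xs ! t) \<noteq> 0" by simp
qed simp


lemma regret_eq: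
  assumes "\<And>i. u i > 0" "\<And>k. v k > 0" "\<And>t. \<beta> t > 0"
  shows "regret \<beta> u v xs =
     ln ((\<Prod>j\<in>set xs. real (count_list xs j) ^ count_list xs j) / real (length xs) ^ length xs)
     - (\<Sum>t<length xs. ln (S_cond \<beta> u v xs t (xs ! t)))"
  unfolding regret_def using ln_S_seq[OF assms] by simp

lemma part1:
  fixes u :: "'a \<Rightarrow> real"
  assumes u_pos: "\<And>i. u i > 0" and v_pos: "\<And>k. v k > 0"
    and c_range: "\<And>t. t \<ge> 1 \<Longrightarrow> 1 \<le> c t \<and> c t \<le> 2"
    and b0_pos: "b0 > 0" and ne: "xs \<noteq> []"
  shows "regret (beta_c b0 c xs) u v xs
           \<le> regret (beta_star b0 xs) u v xs + (real (card (set xs)) - 1) * ln 2"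
proof -
  let ?bs = "beta_star b0 xs" and ?bc = "beta_c b0 c xs"
  let ?N = "\<lambda>t. xs ! t \<notin> set (take t xs)"
  have bs_pos: "\<And>t. ?bs t > 0" using beta_star_pos[OF ne b0_pos] by blast
  have bc_pos: "\<And>t. ?bc t > 0"
  proof -
    fix t show "?bc t > 0"
    proof (cases "t = 0")
      case True then show ?thesis using b0_pos by (simp add: beta_c_def)
    next
      case False then have "c t \<ge> 1" using c_range by simp
      then show ?thesis using bs_pos[of t] False by (simp add: beta_c_def)
    qed
  qed
  have step: "ln (S_cond ?bs u v xs t (xs ! t)) \<le> ln (S_cond ?bc u v xs t (xs ! t)) + (if 0 < t \<and> ?N t then ln 2 else 0)" for t
  proof (cases "t = 0")
    case True
    then have "?bc t = ?bs t" by (simp add: beta_c_def beta_star_def)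
    then show ?thesis using True by (simp add: S_cond_def)
  next
    case False
    have ct: "1 \<le> c t" "c t \<le> 2" using c_range False by auto
    have le1: "?bc t \<le> ?bs t" using False ct bs_pos[of t]
      by (simp add: beta_c_def divide_le_eq)
    have "?bs t * c t \<le> ?bs t * 2" using ct bs_pos[of t] by (intro mult_left_mono) auto
    then have le2: "?bs t / 2 \<le> ?bc t" using False ct
      by (simp add: beta_c_def le_divide_eq)
    have pc: "S_cond ?bc u v xs t (xs ! t) > 0" by (rule S_cond_pos) (use u_pos v_pos bc_pos in auto)
    have ps: "S_cond ?bs u v xs t (xs ! t) > 0" by (rule S_cond_pos) (use u_pos v_pos bs_pos in auto)
    show ?thesis
    proof (cases "cnt xs t (xs ! t) > 0")
      case True
      then have "\<not> ?N t" unfolding cnt_def using count_list_0_iff by fastforce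
      have "S_cond ?bs u v xs t (xs ! t) \<le> S_cond ?bc u v xs t (xs ! t)"
        using True le1 bc_pos[of t] by (simp add: S_cond_def frac_le)
      then show ?thesis using pc ps \<open>\<not> ?N t\<close> by simp
    next
      case cz: False
      then have "?N t" unfolding cnt_def using count_list_0_iff by fastforce
      define w where "w = wt u v xs t (xs ! t)"
      have wp: "w > 0" unfolding w_def wt_def using u_pos v_pos by (simp add: mult_pos_pos)
      have eqs: "S_cond ?bs u v xs t (xs ! t) = ?bs t * w / (t + ?bs t)"
          "S_cond ?bc u v xs t (xs ! t) = ?bc t * w / (t + ?bc t)"
        using cz by (simp_all add: S_cond_def w_def)
      have "?bs t * w / (t + ?bs t) \<le> 2 * (?bc t * w / (t + ?bc t))"
      proof -
        have "?bs t * w / (t + ?bs t) \<le> ?bs t * w / (t + ?bc t)"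
          using bs_pos[of t] bc_pos[of t] wp le1 by (intro divide_left_mono) (auto intro: mult_pos_pos)
        also have "\<dots> \<le> (2 * ?bc t) * w / (t + ?bc t)"
          using le2 wp bc_pos[of t] by (intro divide_right_mono mult_right_mono) auto
        finally show ?thesis by simp
      qed
      then have "ln (S_cond ?bs u v xs t (xs ! t)) \<le> ln (2 * S_cond ?bc u v xs t (xs ! t))"
        using eqs ps by simp
      also have "\<dots> = ln 2 + ln (S_cond ?bc u v xs t (xs ! t))" using pc by (simp add: ln_mult)
      finally show ?thesis using \<open>?N t\<close> False by simp
    qed
  qed
  have sumle: "(\<Sum>t<length xs. ln (S_cond ?bs u v xs t (xs ! t)))
      \<le> (\<Sum>t<length xs. ln (S_cond ?bc u v xs t (xs ! t))) + (\<Sum>t<length xs. (if 0 < t \<and> ?N t then ln 2 else 0))"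
    unfolding sum.distrib[symmetric] by (rule sum_mono) (rule step)
  have cnt: "(\<Sum>t<length xs. (if 0 < t \<and> ?N t then ln 2 else (0::real))) = (real (card (set xs)) - 1) * ln 2"
  proof -
    let ?A = "{t. t < length xs \<and> ?N t}"
    have A: "{..<length xs} \<inter> {t. 0 < t \<and> ?N t} = ?A - {0}" by auto
    have z: "0 \<in> ?A" using ne by simp
    have fin: "finite ?A" by (rule finite_subset[of _ "{..<length xs}"]) auto
    have "(\<Sum>t<length xs. (if 0 < t \<and> ?N t then ln 2 else (0::real))) = real (card (?A - {0})) * ln 2"
      by (simp add: sum.If_cases A del: Int_iff)
    also have "card (?A - {0}) = card ?A - 1" using z fin by simp
    also have "card ?A = card (set xs)" by (rule first_occ_card)
    moreover have "card (set xs) \<ge> 1" using ne by (simp add: Suc_le_eq card_gt_0_iff)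
    ultimately show ?thesis by (simp add: of_nat_diff)
  qed
  show ?thesis
    unfolding regret_eq[OF u_pos v_pos bc_pos] regret_eq[OF u_pos v_pos bs_pos]
    using sumle cnt by linarith
qed


definition phi1 :: "nat \<Rightarrow> real" where "phi1 c = real c * ln (real c)"
definition phi2 :: "real \<Rightarrow> nat \<Rightarrow> real" where "phi2 \<alpha> c = ln (real c) / 2 - \<alpha> / real c"

definition cntf :: "'a list \<Rightarrow> nat \<Rightarrow> 'a \<Rightarrow> nat" where
  "cntf xs t j = count_list (take t xs) j"

lemma cntf_Suc:
  assumes "t < length xs"
  shows "cntf xs (Suc t) j = cntf xs t j + (if j = xs ! t then 1 else 0)"
  using assms unfolding cntf_def by (simp add: take_Suc_conv_app_nth)

lemma sum_update:
  fixes f g :: "'a::finite \<Rightarrow> nat" and \<phi> :: "nat \<Rightarrow> real"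
  assumes "\<And>j. j \<noteq> i \<Longrightarrow> g j = f j"
  shows "(\<Sum>j\<in>UNIV. \<phi> (g j)) = (\<Sum>j\<in>UNIV. \<phi> (f j)) - \<phi> (f i) + \<phi> (g i)"
proof -
  have "(\<Sum>j\<in>UNIV. \<phi> (g j)) = \<phi> (g i) + (\<Sum>j\<in>UNIV - {i}. \<phi> (g j))"
    by (subst sum.remove[of UNIV i]) auto
  also have "(\<Sum>j\<in>UNIV - {i}. \<phi> (g j)) = (\<Sum>j\<in>UNIV - {i}. \<phi> (f j))"
    using assms by (intro sum.cong) auto
  also have "\<dots> = (\<Sum>j\<in>UNIV. \<phi> (f j)) - \<phi> (f i)"
    by (subst sum.remove[of UNIV i]) auto
  finally show ?thesis by simp
qed

lemma m_t_Suc: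
  assumes "t < length xs"
  shows "m_t xs (Suc t) = m_t xs t + (if xs ! t \<in> set (take t xs) then 0 else 1)"
  using assms unfolding m_t_def by (simp add: take_Suc_conv_app_nth insert_absorb)

lemma cntf_zero_iff: "cntf xs t j = 0 \<longleftrightarrow> j \<notin> set (take t xs)"
  unfolding cntf_def by (simp add: count_list_0_iff)

lemma framework:
  fixes u :: "'a::finite \<Rightarrow> real" and \<Psi> :: "nat \<Rightarrow> nat \<Rightarrow> real"
  assumes u_pos: "\<And>i. u i > 0" and v_pos: "\<And>k. v k > 0"
    and b0_pos: "b0 > 0" and ne: "xs \<noteq> []"
    and robbins: "\<And>c::nat. c \<ge> 1 \<Longrightarrow>
        (real c + 1/2) * (ln (real c + 1) - ln (real c)) \<le> 1 + \<alpha> * (1 / real c - 1 / (real c + 1))"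
    and tb: "\<And>t::nat. t \<ge> 1 \<Longrightarrow> 1 \<le> (real t + 1/2) * (ln (real t + 1) - ln (real t))"
    and rep: "\<And>k t. 1 \<le> k \<Longrightarrow> k \<le> t \<Longrightarrow>
        ln (1 + real k / (real t * ln ((real t + 1) / real k))) \<le> \<Psi> k (t+1) - \<Psi> k t"
    and new: "\<And>k t. 1 \<le> k \<Longrightarrow> k \<le> t \<Longrightarrow>
        ln (1 / real t + ln ((real t + 1) / real k) / real k) - 1 + \<alpha> \<le> \<Psi> (k+1) (t+1) - \<Psi> k t"
    and init: "\<alpha> \<le> \<Psi> 1 1" and alpha_nn: "\<alpha> \<ge> 0"
  shows "regret (beta_star b0 xs) u v xs \<le> CL u v xs
       + (\<Sum>j\<in>set xs. ln (real (count_list xs j)) / 2) - ln (real (length xs)) / 2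
       + \<Psi> (card (set xs)) (length xs)"
proof -
  let ?b = "beta_star b0 xs"
  let ?N = "\<lambda>t. xs ! t \<notin> set (take t xs)"
  let ?w = "\<lambda>t. wt u v xs t (xs ! t)"
  let ?S = "\<lambda>t. S_cond ?b u v xs t (xs ! t)"
  define LHS where "LHS t = (\<Sum>j\<in>UNIV. phi1 (cntf xs t j)) - phi1 t - (\<Sum>s<t. ln (?S s))" for t
  define RHS where "RHS t = (\<Sum>s<t. if ?N s then ln (1 / ?w s) else 0) + (\<Sum>j\<in>UNIV. phi2 \<alpha> (cntf xs t j))
      - ln (real t) / 2 + \<Psi> (m_t xs t) t" for t
  have bpos: "\<And>t. ?b t > 0" using beta_star_pos[OF ne b0_pos] by blast
  have wpos: "\<And>t. ?w t > 0" using u_pos v_pos by (simp add: wt_def mult_pos_pos)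
  have p10: "phi1 0 = 0" "phi1 1 = 0" by (simp_all add: phi1_def)
  have p20: "phi2 \<alpha> 0 = 0" "phi2 \<alpha> 1 = - \<alpha>" by (simp_all add: phi2_def)
  have baseQ: "LHS 1 \<le> RHS 1"
  proof -
    have c1: "cntf xs 1 j = (if j = xs ! 0 then 1 else 0)" for j
      using cntf_Suc[of 0 xs j] ne by (simp add: cntf_def)
    have "phi1 (cntf xs 1 j) = 0" for j using c1[of j] p10 by (cases "j = xs ! 0") auto
    then have s1: "(\<Sum>j\<in>UNIV. phi1 (cntf xs 1 j)) = 0" by simp
    have s2: "(\<Sum>j\<in>UNIV. phi2 \<alpha> (cntf xs 1 j)) = - \<alpha>"
    proof -
      have "(\<Sum>j\<in>UNIV. phi2 \<alpha> (cntf xs 1 j)) = (\<Sum>j\<in>UNIV. if j = xs ! 0 then - \<alpha> else 0)"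
        using c1 p20 by (intro sum.cong) auto
      also have "\<dots> = - \<alpha>" by simp
      finally show ?thesis .
    qed
    have S0: "?S 0 = ?w 0"
      using bpos[of 0] by (simp add: S_cond_def cnt_def beta_star_def)
    have m1: "m_t xs 1 = 1" using ne by (cases xs) (simp_all add: m_t_def)
    show ?thesis unfolding LHS_def RHS_def using s1 s2 S0 m1 init p10 wpos[of 0]
      by (simp add: ln_div)
  qed
  have stepQ: "LHS (Suc t) - LHS t \<le> RHS (Suc t) - RHS t" if t1: "1 \<le> t" and tn: "t < length xs" for t
  proof -
    define i where "i = xs ! t"
    define c where "c = cntf xs t i"
    define k where "k = m_t xs t"
    have k1: "1 \<le> k" using m_t_pos[OF ne t1] by (simp add: k_def)
    have kt: "k \<le> t" using m_t_le by (simp add: k_def)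
    define L where "L = ln ((real t + 1) / real k)"
    have Lpos: "L > 0" using k1 kt by (simp add: L_def)
    have beq: "?b t = real k / L" using t1 by (simp add: beta_star_def k_def L_def add.commute)
    have cS: "cntf xs (Suc t) j = cntf xs t j + (if j = i then 1 else 0)" for j
      using cntf_Suc[OF tn] by (simp add: i_def)
    have sum1: "(\<Sum>j\<in>UNIV. phi1 (cntf xs (Suc t) j)) = (\<Sum>j\<in>UNIV. phi1 (cntf xs t j)) - phi1 c + phi1 (c+1)"
      using sum_update[of i "cntf xs (Suc t)" "cntf xs t" phi1] cS by (simp add: c_def)
    have sum2: "(\<Sum>j\<in>UNIV. phi2 \<alpha> (cntf xs (Suc t) j)) = (\<Sum>j\<in>UNIV. phi2 \<alpha> (cntf xs t j)) - phi2 \<alpha> c + phi2 \<alpha> (c+1)"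
      using sum_update[of i "cntf xs (Suc t)" "cntf xs t" "phi2 \<alpha>"] cS by (simp add: c_def)
    have cnteq: "cnt xs t i = c" by (simp add: cnt_def c_def cntf_def)
    have Nc: "?N t \<longleftrightarrow> c = 0" using cntf_zero_iff[of xs t i] by (simp add: c_def i_def)
    have mS: "m_t xs (Suc t) = k + (if c = 0 then 1 else 0)"
      using m_t_Suc[OF tn] Nc unfolding k_def i_def by auto
    have dL: "LHS (Suc t) - LHS t = phi1 (c+1) - phi1 c - (phi1 (t+1) - phi1 t) - ln (?S t)"
      unfolding LHS_def using sum1 by simp
    have dR: "RHS (Suc t) - RHS t = (if c = 0 then ln (1 / ?w t) else 0) + phi2 \<alpha> (c+1) - phi2 \<alpha> c
        - (ln (real t + 1) - ln (real t)) / 2 + \<Psi> (m_t xs (Suc t)) (t+1) - \<Psi> k t"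
      unfolding RHS_def using sum2 Nc by (simp add: k_def add.commute diff_divide_distrib)
    have tpos: "real t > 0" using t1 by simp
    have tbt: "1 \<le> (real t + 1/2) * (ln (real t + 1) - ln (real t))" using tb t1 by simp
    have ph1t: "phi1 (t+1) - phi1 t = (real t + 1/2) * (ln (real t + 1) - ln (real t)) + ln (real t)
       + (ln (real t + 1) - ln (real t)) / 2"
      by (simp add: phi1_def field_simps)
    show ?thesis
    proof (cases "c = 0")
      case False
      then have c1: "c \<ge> 1" by simp
      have Sv: "?S t = real c / (real t + real k / L)"
        using cnteq False by (simp add: S_cond_def i_def beq)
      have lnS: "ln (?S t) = ln (real c) - ln (real t) - ln (1 + real k / (real t * L))"
      proof -
        have "real t + real k / L = real t * (1 + real k / (real t * L))" using tpos Lpos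
          by (simp add: field_simps)
        moreover have "1 + real k / (real t * L) > 0" using tpos Lpos k1
          by (simp add: add_pos_nonneg)
        ultimately show ?thesis using Sv c1 tpos by (simp add: ln_div ln_mult)
      qed
      have rb: "(real c + 1/2) * (ln (real c + 1) - ln (real c)) \<le> 1 + \<alpha> * (1 / real c - 1 / (real c + 1))"
        using robbins c1 by blast
      have ph1c: "phi1 (c+1) - phi1 c - ln (real c) - (phi2 \<alpha> (c+1) - phi2 \<alpha> c)
          = (real c + 1/2) * (ln (real c + 1) - ln (real c)) - \<alpha> * (1 / real c - 1 / (real c + 1))"
        by (simp add: phi1_def phi2_def algebra_simps)
      have rp: "ln (1 + real k / (real t * L)) \<le> \<Psi> k (t+1) - \<Psi> k t"
        using rep[OF k1 kt] by (simp add: L_def)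
      show ?thesis using dL dR lnS rb ph1c rp mS False tbt ph1t by simp
    next
      case True
      have Sv: "?S t = real k / L * ?w t / (real t + real k / L)"
        using cnteq True by (simp add: S_cond_def i_def beq)
      have lnS: "ln (?S t) = ln (?w t) - ln (1 / real t + L / real k) - ln (real t)"
      proof -
        have e: "real k / L * ?w t / (real t + real k / L) = ?w t / (real t * (1 / real t + L / real k))"
        proof -
          have d1: "real t + real k / L = (real k + L * real t) / L" using Lpos by (simp add: field_simps)
          have d2: "real t * (1 / real t + L / real k) = (real k + L * real t) / real k"
            using tpos k1 by (simp add: field_simps)
          have pp: "real k + L * real t > 0" using tpos Lpos k1 by (simp add: add_pos_pos)
          show ?thesis unfolding d1 d2 using Lpos k1 pp by simp
        qed
        have "1 / real t + L / real k > 0" using tpos Lpos k1 by (simp add: add_pos_pos)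
        then show ?thesis using Sv e wpos[of t] tpos by (simp add: ln_div ln_mult)
      qed
      have np: "ln (1 / real t + L / real k) - 1 + \<alpha> \<le> \<Psi> (k+1) (t+1) - \<Psi> k t"
        using new[OF k1 kt] by (simp add: L_def)
      have lw: "ln (1 / ?w t) = - ln (?w t)" by (simp add: ln_div)
      show ?thesis using dL dR lnS np mS True tbt ph1t p10 p20 lw by simp
    qed
  qed
  have inv: "LHS t \<le> RHS t" if "1 \<le> t" "t \<le> length xs" for t
    using that
  proof (induction t rule: dec_induct)
    case base then show ?case using baseQ by simp
  next
    case (step t)
    then show ?case using stepQ[of t] by simp
  qed
  have fin: "LHS (length xs) \<le> RHS (length xs)" using inv ne by (simp add: Suc_le_eq)
  let ?n = "length xs"
  have cn: "cntf xs ?n j = count_list xs j" for j by (simp add: cntf_def)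
  have mn: "m_t xs ?n = card (set xs)" by (simp add: m_t_def)
  have np: "real ?n > 0" using ne by simp
  have cpos: "j \<in> set xs \<Longrightarrow> count_list xs j > 0" for j using count_list_0_iff[of xs j] by (simp add: gr0I)
  have sum_phi1: "(\<Sum>j\<in>UNIV. phi1 (count_list xs j)) = (\<Sum>j\<in>set xs. phi1 (count_list xs j))"
    by (rule sum.mono_neutral_right) (auto simp: phi1_def count_list_0_iff)
  have lnprod: "ln ((\<Prod>j\<in>set xs. real (count_list xs j) ^ count_list xs j) / real ?n ^ ?n)
      = (\<Sum>j\<in>set xs. phi1 (count_list xs j)) - phi1 ?n"
  proof -
    have pz: "(\<Prod>j\<in>set xs. real (count_list xs j) ^ count_list xs j) \<noteq> 0"
      using cpos by (simp add: prod_zero_iff)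
    have "ln (\<Prod>j\<in>set xs. real (count_list xs j) ^ count_list xs j) = (\<Sum>j\<in>set xs. ln (real (count_list xs j) ^ count_list xs j))"
      by (rule ln_prod) (use cpos in auto)
    also have "\<dots> = (\<Sum>j\<in>set xs. phi1 (count_list xs j))"
      by (simp add: ln_realpow phi1_def)
    finally show ?thesis using pz np by (simp add: ln_div ln_realpow phi1_def)
  qed
  have bpos': "\<And>t. ?b t > 0" by (rule bpos)
  have L: "LHS ?n = regret ?b u v xs"
    unfolding LHS_def regret_eq[OF u_pos v_pos bpos'] lnprod cn sum_phi1 by simp
  have CLe: "(\<Sum>s<?n. if ?N s then ln (1 / ?w s) else 0) = CL u v xs"
  proof -
    have "(\<Sum>s<?n. if ?N s then ln (1 / ?w s) else 0) = (\<Sum>s\<in>{s\<in>{..<?n}. ?N s}. ln (1 / ?w s))"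
      by (rule sum.inter_filter[symmetric]) simp
    also have "{s\<in>{..<?n}. ?N s} = {t. t < ?n \<and> ?N t}" by auto
    finally show ?thesis by (simp add: CL_def)
  qed
  have p2: "(\<Sum>j\<in>UNIV. phi2 \<alpha> (count_list xs j)) \<le> (\<Sum>j\<in>set xs. ln (real (count_list xs j)) / 2)"
  proof -
    have "(\<Sum>j\<in>UNIV. phi2 \<alpha> (count_list xs j)) \<le> (\<Sum>j\<in>UNIV. ln (real (count_list xs j)) / 2)"
      by (rule sum_mono) (simp add: phi2_def alpha_nn)
    also have "\<dots> = (\<Sum>j\<in>set xs. ln (real (count_list xs j)) / 2)"
      by (rule sum.mono_neutral_right) (auto simp: count_list_0_iff)
    finally show ?thesis .
  qed
  have R: "RHS ?n \<le> CL u v xs + (\<Sum>j\<in>set xs. ln (real (count_list xs j)) / 2) - ln (real ?n) / 2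
       + \<Psi> (card (set xs)) ?n"
    unfolding RHS_def cn mn CLe using p2 by simp
  show ?thesis using fin L R by simp
qed


lemma ln_series_bounds:
  fixes z :: real assumes "z > 1"
  defines "y \<equiv> (z - 1) / (z + 1)"
  shows "ln z \<ge> 2*y + 2*y^3/3" and "ln z \<le> 2*y + 2*y^3/3 + 2*(y^5 / (1 - y^2) / 5)"
    and "ln z \<ge> 2*y" and "ln z \<le> 2*y + 2*(y^3 / (1 - y^2) / 3)"
proof -
  have A: "ln z \<in> {(\<Sum>k<2. 2*y^(2*k+1) / of_nat (2*k+1)) .. (\<Sum>k<2. 2*y^(2*k+1) / of_nat (2*k+1)) + 2*(y^(2*2+1) / (1 - y^2) / of_nat (2*2+1))}"
    using ln_approx_bounds[OF assms(1), of 2] unfolding y_def by simp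
  have B: "ln z \<in> {(\<Sum>k<1. 2*y^(2*k+1) / of_nat (2*k+1)) .. (\<Sum>k<1. 2*y^(2*k+1) / of_nat (2*k+1)) + 2*(y^(2*1+1) / (1 - y^2) / of_nat (2*1+1))}"
    using ln_approx_bounds[OF assms(1), of 1] unfolding y_def by simp
  show "ln z \<ge> 2*y + 2*y^3/3" "ln z \<le> 2*y + 2*y^3/3 + 2*(y^5 / (1 - y^2) / 5)"
    using A by (simp_all add: eval_nat_numeral)
  show "ln z \<ge> 2*y" "ln z \<le> 2*y + 2*(y^3 / (1 - y^2) / 3)"
    using B by (simp_all add: eval_nat_numeral)
qed

lemma ln1p_ge: fixes x :: real assumes "x \<ge> 0" shows "ln (1 + x) \<ge> 2*x / (2 + x)"
proof (cases "x = 0")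
  case True then show ?thesis by simp
next
  case False
  then have "1 + x > 1" using assms by simp
  from ln_series_bounds(3)[OF this] show ?thesis by (simp add: add.commute)
qed

lemma ln_diff_ge: fixes a b :: real assumes "0 < a" "a \<le> b" shows "ln b - ln a \<ge> (b - a) / b"
proof -
  have "ln (a / b) \<le> a / b - 1" using assms by (intro ln_le_minus_one) simp
  then show ?thesis using assms by (simp add: ln_div field_simps)
qed

lemma ln_diff_le: fixes a b :: real assumes "0 < a" "a \<le> b" shows "ln b - ln a \<le> (b - a) / a"
proof -
  have "ln (b / a) \<le> b / a - 1" using assms by (intro ln_le_minus_one) simp
  then show ?thesis using assms by (simp add: ln_div field_simps)
qed

lemma robbins_aux: fixes q c :: real assumes "q > 0" "c > 0"
  shows "q/2 * (2 * (1 / (q * (4 * c * (c + 1)))) / 3) = 1 / (12 * c * (c + 1))"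
proof -
  define X where "X = c * (c + 1)"
  have X: "X > 0" using assms by (simp add: X_def)
  have "q/2 * (2 * (1 / (q * (4 * X))) / 3) = 1 / (12 * X)" using X assms by (simp add: field_simps)
  then show ?thesis by (simp add: X_def mult.assoc)
qed

lemma robbins:
  fixes c :: real assumes "c \<ge> 1"
  shows "(c + 1/2) * (ln (c + 1) - ln c) \<le> 1 + 1/12 * (1 / c - 1 / (c + 1))"
proof -
  define z where "z = (c + 1) / c"
  define q where "q = 2*c + 1"
  have q1: "q \<ge> 3" using assms by (simp add: q_def)
  have z1: "z > 1" using assms by (simp add: z_def)
  have y: "(z - 1) / (z + 1) = 1 / q" using assms by (simp add: z_def q_def field_simps)
  have L: "ln z \<le> 2 * (1 / q) + 2 * ((1 / q)^3 / (1 - (1 / q)^2) / 3)"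
    using ln_series_bounds(4)[OF z1] unfolding y .
  have e1: "(1 / q)^3 / (1 - (1 / q)^2) = 1 / (q * (q*q - 1))"
    using q1 by (simp add: field_simps power2_eq_square power3_eq_cube)
  have e2: "q*q - 1 = 4 * c * (c + 1)" by (simp add: q_def algebra_simps)
  have "(c + 1/2) * ln z \<le> (c + 1/2) * (2 * (1 / q) + 2 * (1 / (q * (4 * c * (c + 1)))) / 3)"
    using L e1 e2 assms by (intro mult_left_mono) auto
  also have "\<dots> = (c + 1/2) * (2 * (1 / q)) + (c + 1/2) * (2 * (1 / (q * (4 * c * (c + 1)))) / 3)"
    by (simp add: algebra_simps)
  also have "(c + 1/2) * (2 * (1 / q)) = 1" using q1 by (simp add: q_def field_simps)
  also have "(c + 1/2) * (2 * (1 / (q * (4 * c * (c + 1)))) / 3) = 1 / (12 * c * (c + 1))"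
  proof -
    have ch: "c + 1/2 = q / 2" by (simp add: q_def)
    show ?thesis unfolding ch using q1 assms by (intro robbins_aux) auto
  qed
  also have "1 / (12 * c * (c + 1)) = 1/12 * (1 / c - 1 / (c + 1))"
    using assms by (simp add: field_simps)
  finally have "(c + 1/2) * ln z \<le> 1 + 1/12 * (1 / c - 1 / (c + 1))" .
  moreover have "ln z = ln (c + 1) - ln c" using assms by (simp add: z_def ln_div)
  ultimately show ?thesis by simp
qed

lemma tbound:
  fixes t :: real assumes "t \<ge> 1"
  shows "1 \<le> (t + 1/2) * (ln (t + 1) - ln t)"
proof -
  have a: "ln (1 + 1/t) \<ge> 2*(1/t) / (2 + 1/t)" using assms by (intro ln1p_ge) simp
  have b: "ln (1 + 1/t) = ln (t + 1) - ln t" using assms by (simp add: ln_div field_simps)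
  have c: "2*(1/t) / (2 + 1/t) = 1 / (t + 1/2)" using assms by (simp add: field_simps)
  have "1 / (t + 1/2) \<le> ln (t + 1) - ln t" using a b c by simp
  then show ?thesis using assms by (simp add: divide_le_eq mult.commute)
qed


lemma ln2_bounds: "6931/10000 \<le> ln (2::real)" "ln (2::real) \<le> 6932/10000"
proof -
  have "ln (2::real) \<in> {(\<Sum>k<4. 2*(1/3)^(2*k+1) / of_nat (2*k+1)) .. (\<Sum>k<4. 2*(1/3)^(2*k+1) / of_nat (2*k+1)) + 2*((1/3)^(2*4+1) / (1 - (1/3)^2) / of_nat (2*4+1))}"
    using ln_approx_bounds[of 2 4] by simp
  then show "6931/10000 \<le> ln (2::real)" "ln (2::real) \<le> 6932/10000"
    by (simp_all add: eval_nat_numeral)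
qed

lemma ln3_bounds: "10986/10000 \<le> ln (3::real)" "ln (3::real) \<le> 10987/10000"
proof -
  have "ln (3::real) \<in> {(\<Sum>k<7. 2*(1/2)^(2*k+1) / of_nat (2*k+1)) .. (\<Sum>k<7. 2*(1/2)^(2*k+1) / of_nat (2*k+1)) + 2*((1/2)^(2*7+1) / (1 - (1/2)^2) / of_nat (2*7+1))}"
    using ln_approx_bounds[of 3 7] by simp
  then show "10986/10000 \<le> ln (3::real)" "ln (3::real) \<le> 10987/10000"
    by (simp_all add: eval_nat_numeral)
qed

lemma ln_upper3: fixes x :: real assumes "x > 1"
  shows "ln x \<le> 2*((x-1)/(x+1)) + 2*((x-1)/(x+1))^3/3 + 2*(((x-1)/(x+1))^5 / (1 - ((x-1)/(x+1))^2) / 5)"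
  using ln_series_bounds(2)[OF assms] by simp

lemma ln_lower3: fixes x :: real assumes "x > 1"
  defines "y \<equiv> (x-1)/(x+1)"
  shows "ln x \<ge> 2*y + 2*y^3/3 + 2*y^5/5"
proof -
  have "ln x \<in> {(\<Sum>k<3. 2*y^(2*k+1) / of_nat (2*k+1)) .. (\<Sum>k<3. 2*y^(2*k+1) / of_nat (2*k+1)) + 2*(y^(2*3+1) / (1 - y^2) / of_nat (2*3+1))}"
    using ln_approx_bounds[OF assms(1), of 3] unfolding y_def by simp
  then show ?thesis by (simp add: eval_nat_numeral)
qed

lemma ln_upper5: fixes x :: real assumes "x > 1"
  defines "y \<equiv> (x-1)/(x+1)"
  shows "ln x \<le> 2*y + 2*y^3/3 + 2*y^5/5 + 2*y^7/7 + 2*y^9/9 + 2*(y^11 / (1 - y^2) / 11)"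
proof -
  have "ln x \<in> {(\<Sum>k<5. 2*y^(2*k+1) / of_nat (2*k+1)) .. (\<Sum>k<5. 2*y^(2*k+1) / of_nat (2*k+1)) + 2*(y^(2*5+1) / (1 - y^2) / of_nat (2*5+1))}"
    using ln_approx_bounds[OF assms(1), of 5] unfolding y_def by simp
  then show ?thesis by (simp add: eval_nat_numeral)
qed

lemma ln_lower2: fixes x :: real assumes "x > 1"
  shows "ln x \<ge> 2*((x-1)/(x+1)) + 2*((x-1)/(x+1))^3/3"
  using ln_series_bounds(1)[OF assms] by simp

lemma ln15_bounds: "4054/10000 \<le> ln (3/2::real)" "ln (3/2::real) \<le> 4055/10000"
proof -
  show "ln (3/2::real) \<le> 4055/10000" using ln_upper3[of "3/2"] by (simp add: eval_nat_numeral)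
  show "4054/10000 \<le> ln (3/2::real)" using ln_lower3[of "3/2"] by (simp add: eval_nat_numeral)
qed

lemma lnln2_lower: "ln (ln (2::real)) \<ge> - 3666/10000"
proof -
  have "ln (ln (2::real)) \<ge> ln (6931/10000)" using ln2_bounds by simp
  moreover have "ln (6931/10000::real) = - ln (10000/6931)" by (simp add: ln_div)
  moreover have "ln (10000/6931::real) \<le> 3666/10000" using ln_upper3[of "10000/6931"] by (simp add: eval_nat_numeral)
  ultimately show ?thesis by linarith
qed

lemma lnln3_lower: "ln (ln (3::real)) \<ge> 939/10000"
proof -
  have "ln (ln (3::real)) \<ge> ln (10986/10000)" using ln3_bounds by simp
  moreover have "ln (10986/10000::real) \<ge> 939/10000" using ln_lower2[of "10986/10000"] by (simp add: eval_nat_numeral)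
  ultimately show ?thesis by linarith
qed

lemma ln_1_ln3_upper: "ln (1 + ln (3::real)) \<le> 7415/10000"
proof -
  have "ln (1 + ln (3::real)) \<le> ln (20987/10000)" using ln3_bounds by simp
  moreover have "ln (20987/10000::real) \<le> 7415/10000" using ln_upper3[of "20987/10000"] by (simp add: eval_nat_numeral)
  ultimately show ?thesis by linarith
qed

lemma ln_1_ln15_upper: "ln (1 + ln (3/2::real)) \<le> 3404/10000"
proof -
  have "ln (1 + ln (3/2::real)) \<le> ln (14055/10000)" using ln15_bounds by simp
  moreover have "ln (14055/10000::real) \<le> 3404/10000" using ln_upper3[of "14055/10000"] by (simp add: eval_nat_numeral)
  ultimately show ?thesis by linarith
qed

lemma ln_1_inv_ln2_upper: "ln (1 + 1 / ln (2::real)) \<le> 8932/10000"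
proof -
  have "1 / ln (2::real) \<le> 10000/6931" using ln2_bounds by (simp add: divide_simps)
  then have "1 + 1 / ln (2::real) \<le> 16931/6931" by simp
  then have "ln (1 + 1 / ln (2::real)) \<le> ln (16931/6931)" using ln2_bounds by (intro ln_mono) (auto intro: add_pos_nonneg)
  moreover have "ln (16931/6931::real) \<le> 8932/10000" using ln_upper5[of "16931/6931"] by (simp add: eval_nat_numeral)
  ultimately show ?thesis by linarith
qed

lemma ln_1_inv_2ln3_upper: "ln (1 + 1 / (2 * ln (3::real))) \<le> 3751/10000"
proof -
  have "1 / (2 * ln (3::real)) \<le> 10000/21972" using ln3_bounds by (simp add: divide_simps)
  then have "1 + 1 / (2 * ln (3::real)) \<le> 31972/21972" by simp
  then have "ln (1 + 1 / (2 * ln (3::real))) \<le> ln (31972/21972)" using ln3_bounds by (intro ln_mono) (auto intro: add_pos_nonneg)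
  moreover have "ln (31972/21972::real) \<le> 3751/10000" using ln_upper5[of "31972/21972"] by (simp add: eval_nat_numeral)
  ultimately show ?thesis by linarith
qed


lemma ln_sub_ge: fixes a b :: real assumes "a > 0" "b > 0" shows "ln a - ln b \<ge> 1 - b / a"
proof -
  have "ln (b / a) \<le> b / a - 1" using assms by (intro ln_le_minus_one) simp
  then show ?thesis using assms by (simp add: ln_div)
qed

lemma ln_sub_le: fixes a b :: real assumes "a > 0" "b > 0" shows "ln a - ln b \<le> a / b - 1"
proof -
  have "ln (a / b) \<le> a / b - 1" using assms by (intro ln_le_minus_one) simp
  then show ?thesis using assms by (simp add: ln_div)
qed

definition Ef :: "real \<Rightarrow> real \<Rightarrow> real" where "Ef b y = y * ln (1 + b / y)"
definition Ed :: "real \<Rightarrow> real \<Rightarrow> real" where "Ed b y = ln (1 + b / y) - b / (y + b)"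

lemma Ef_zero[simp]: "Ef b 0 = 0" by (simp add: Ef_def)

lemma Ef_nonneg: "b > 0 \<Longrightarrow> y \<ge> 0 \<Longrightarrow> Ef b y \<ge> 0"
  unfolding Ef_def by (intro mult_nonneg_nonneg) auto

lemma Ef_le: assumes "b > 0" "y \<ge> 0" shows "Ef b y \<le> b"
proof (cases "y = 0")
  case False
  then have yp: "y > 0" using assms by simp
  have "ln (1 + b / y) \<le> b / y" using yp assms by (intro ln_add_one_self_le_self) simp
  then have "y * ln (1 + b / y) \<le> y * (b / y)" using yp by (intro mult_left_mono) auto
  then show ?thesis using yp by (simp add: Ef_def)
qed (use assms in simp)

lemma Ed_nonneg: assumes "b > 0" "y > 0" shows "Ed b y \<ge> 0"
proof -
  have "ln (1 + b / y) \<ge> 2 * (b / y) / (2 + b / y)" using assms by (intro ln1p_ge) simp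
  moreover have "2 * (b / y) / (2 + b / y) \<ge> b / (y + b)"
  proof -
    have "2 * (b / y) / (2 + b / y) = 2 * b / (2 * y + b)" using assms by (simp add: field_simps)
    also have "\<dots> \<ge> b / (y + b)" using assms by (simp add: frac_le divide_simps)
    finally show ?thesis .
  qed
  ultimately show ?thesis by (simp add: Ed_def)
qed

lemma E_conc_lo:
  assumes bp: "b > 0" and "0 \<le> u1" "u1 < u2"
  shows "Ef b u2 - Ef b u1 \<ge> (u2 - u1) * Ed b u2"
proof (cases "u1 = 0")
  case True
  have u2: "u2 > 0" using assms by simp
  have "Ef b u2 - u2 * Ed b u2 = u2 * (b / (u2 + b))" by (simp add: Ef_def Ed_def algebra_simps)
  moreover have "u2 * (b / (u2 + b)) \<ge> 0" using u2 bp by simp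
  ultimately show ?thesis using True by simp
next
  case False
  then have u1: "u1 > 0" using assms by simp
  have u2: "u2 > 0" using assms by simp
  define w2 where "w2 = u2 + b"
  have p: "w2 > 0" using u2 bp by (auto simp: w2_def)
  define A where "A = w2 / u2"
  define B where "B = (u1 + b) / u1"
  have AA: "1 + b / u2 = A" "1 + b / u1 = B" using u1 u2 by (simp_all add: field_simps w2_def A_def B_def)
  have Ap: "A > 0" "B > 0" using u1 u2 p bp by (simp_all add: A_def B_def)
  have l: "ln A - ln B \<ge> 1 - B / A" by (rule ln_sub_ge) (use Ap in auto)
  have "1 - B / A = (u1 * w2 - (u1 + b) * u2) / (u1 * w2)" using u1 u2 p by (simp add: field_simps A_def B_def)
  also have "u1 * w2 - (u1 + b) * u2 = b * (u1 - u2)" by (simp add: w2_def algebra_simps)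
  finally have e: "1 - B / A = b * (u1 - u2) / (u1 * w2)" .
  have "u1 * (ln A - ln B) \<ge> u1 * (b * (u1 - u2) / (u1 * w2))"
    using l e u1 by (intro mult_left_mono) auto
  also have "u1 * (b * (u1 - u2) / (u1 * w2)) = b * (u1 - u2) / w2"
    using u1 by simp
  finally have key: "u1 * (ln A - ln B) \<ge> b * (u1 - u2) / w2" .
  have "Ef b u2 - Ef b u1 - (u2 - u1) * Ed b u2 = u1 * (ln A - ln B) + (u2 - u1) * (b / w2)"
    unfolding Ef_def Ed_def AA[symmetric] w2_def by (simp add: algebra_simps)
  moreover have "(u2 - u1) * (b / w2) + b * (u1 - u2) / w2 = 0"
    by (simp add: algebra_simps add_divide_distrib[symmetric])
  ultimately show ?thesis using key by linarith
qed

lemma E_conc_hi: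
  assumes bp: "b > 0" and "0 < u1" "u1 \<le> u2"
  shows "Ef b u2 - Ef b u1 \<le> (u2 - u1) * Ed b u1"
proof -
  have u1: "u1 > 0" and u2: "u2 > 0" using assms by auto
  define w1 where "w1 = u1 + b"
  have p: "w1 > 0" using u1 bp by (auto simp: w1_def)
  define A where "A = (u2 + b) / u2"
  define B where "B = w1 / u1"
  have AA: "1 + b / u2 = A" "1 + b / u1 = B" using u1 u2 by (simp_all add: field_simps w1_def A_def B_def)
  have Ap: "A > 0" "B > 0" using u1 u2 p bp by (simp_all add: A_def B_def add_pos_pos)
  have l: "ln A - ln B \<le> A / B - 1" by (rule ln_sub_le) (use Ap in auto)
  have "A / B - 1 = ((u2 + b) * u1 - u2 * w1) / (u2 * w1)" using u1 u2 p by (simp add: field_simps A_def B_def)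
  also have "(u2 + b) * u1 - u2 * w1 = b * (u1 - u2)" by (simp add: w1_def algebra_simps)
  finally have e: "A / B - 1 = b * (u1 - u2) / (u2 * w1)" .
  have "u2 * (ln A - ln B) \<le> u2 * (b * (u1 - u2) / (u2 * w1))"
    using l e u2 by (intro mult_left_mono) auto
  also have "u2 * (b * (u1 - u2) / (u2 * w1)) = b * (u1 - u2) / w1"
    using u2 by simp
  finally have key: "u2 * (ln A - ln B) \<le> b * (u1 - u2) / w1" .
  have "Ef b u2 - Ef b u1 - (u2 - u1) * Ed b u1 = u2 * (ln A - ln B) + (u2 - u1) * (b / w1)"
    unfolding Ef_def Ed_def AA[symmetric] w1_def by (simp add: algebra_simps)
  moreover have "(u2 - u1) * (b / w1) + b * (u1 - u2) / w1 = 0"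
    by (simp add: algebra_simps add_divide_distrib[symmetric])
  ultimately show ?thesis using key by linarith
qed

lemma lnln_lo:
  fixes x1 x2 :: real assumes "1 \<le> x1" "x1 \<le> x2"
  shows "ln (ln (2*x2)) - ln (ln (2*x1)) \<ge> (x2 - x1) / (x2 * ln (2*x2))"
proof -
  have l1: "ln (2*x1) > 0" "ln (2*x2) > 0" using assms by auto
  have le: "ln (2*x1) \<le> ln (2*x2)" using assms by simp
  have a: "ln (ln (2*x2)) - ln (ln (2*x1)) \<ge> (ln (2*x2) - ln (2*x1)) / ln (2*x2)"
    by (rule ln_diff_ge) (use l1 le in auto)
  have b: "ln (2*x2) - ln (2*x1) \<ge> (2*x2 - 2*x1) / (2*x2)"
    by (rule ln_diff_ge) (use assms in auto)
  have "(x2 - x1) / (x2 * ln (2*x2)) = ((2*x2 - 2*x1) / (2*x2)) / ln (2*x2)"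
    using assms by (simp add: field_simps)
  also have "\<dots> \<le> (ln (2*x2) - ln (2*x1)) / ln (2*x2)"
    using b l1 by (intro divide_right_mono) auto
  finally show ?thesis using a by linarith
qed

lemma lnln_hi:
  fixes x1 x2 :: real assumes "1 \<le> x1" "x1 \<le> x2"
  shows "ln (ln (2*x2)) - ln (ln (2*x1)) \<le> (x2 - x1) / (x1 * ln (2*x1))"
proof -
  have l1: "ln (2*x1) > 0" "ln (2*x2) > 0" using assms by auto
  have le: "ln (2*x1) \<le> ln (2*x2)" using assms by simp
  have a: "ln (ln (2*x2)) - ln (ln (2*x1)) \<le> (ln (2*x2) - ln (2*x1)) / ln (2*x1)"
    by (rule ln_diff_le) (use l1 le in auto)
  have b: "ln (2*x2) - ln (2*x1) \<le> (2*x2 - 2*x1) / (2*x1)"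
    by (rule ln_diff_le) (use assms in auto)
  have "(ln (2*x2) - ln (2*x1)) / ln (2*x1) \<le> ((2*x2 - 2*x1) / (2*x1)) / ln (2*x1)"
    using b l1 by (intro divide_right_mono) auto
  also have "\<dots> = (x2 - x1) / (x1 * ln (2*x1))"
    using assms by (simp add: field_simps)
  finally show ?thesis using a by linarith
qed


definition fL :: "real \<Rightarrow> real \<Rightarrow> real" where
  "fL c y = (1+y) * (2*y + 2*y^3/3 + 2*(y^5/c/5) + 6932/10000)"
definition gA :: "real \<Rightarrow> real" where
  "gA y = 3/2*(6/5+4*y/5)*(1-y)*(1+y^2/3)"
definition gB :: "real \<Rightarrow> real" where
  "gB y = 3/4*(6/5+4*y/5)*(1+3*y)*(1+y^2/3)"

lemma gB_eq: "gB y = 3/4 * ((6/5+4*y/5)*(1+3*y)*(1+y^2/3))"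
  unfolding gB_def by (simp only: mult.assoc)
lemma gA_eq: "gA y = 3/2 * ((6/5+4*y/5)*(1-y)*(1+y^2/3))"
  unfolding gA_def by (simp only: mult.assoc)

lemma fL_mono: assumes "c > 0" "0 \<le> y" "y \<le> y'" shows "fL c y \<le> fL c y'"
proof -
  have p3: "y^3 \<le> y'^3" and p5: "y^5 \<le> y'^5" using assms by (auto intro: power_mono)
  have "y^5/c/5 \<le> y'^5/c/5" using p5 assms by (intro divide_right_mono) auto
  then have i: "2*y + 2*y^3/3 + 2*(y^5/c/5) + 6932/10000 \<le> 2*y' + 2*y'^3/3 + 2*(y'^5/c/5) + 6932/10000"
    using p3 assms by linarith
  have nn: "0 \<le> 2*y + 2*y^3/3 + 2*(y^5/c/5) + 6932/10000" using assms by simp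
  show ?thesis unfolding fL_def using i nn assms by (intro mult_mono) auto
qed

lemma gB_mono: assumes "0 \<le> y" "y \<le> y'" shows "gB y \<le> gB y'"
proof -
  have a: "6/5+4*y/5 \<le> 6/5+4*y'/5" "1+3*y \<le> 1+3*y'" "1+y^2/3 \<le> 1+y'^2/3"
    using assms by (auto intro: power_mono)
  have "(6/5+4*y/5)*(1+3*y) \<le> (6/5+4*y'/5)*(1+3*y')" using a assms by (intro mult_mono) auto
  moreover have "0 \<le> (6/5+4*y/5)*(1+3*y)" using assms by simp
  ultimately have "(6/5+4*y/5)*(1+3*y)*(1+y^2/3) \<le> (6/5+4*y'/5)*(1+3*y')*(1+y'^2/3)"
    using a assms by (intro mult_mono) auto
  then have "3/4 * ((6/5+4*y/5)*(1+3*y)*(1+y^2/3)) \<le> 3/4 * ((6/5+4*y'/5)*(1+3*y')*(1+y'^2/3))"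
    by (rule mult_left_mono) simp
  then show ?thesis by (simp only: gB_eq)
qed

lemma poly1: fixes y :: real assumes "0 < y" "y \<le> 1/5"
  shows "fL (24/25) y \<le> gA y"
proof -
  have "fL (24/25) y \<le> fL (24/25) (1/5)" using assms by (intro fL_mono) auto
  also have "\<dots> \<le> 3/2 * (6/5) * (4/5) * 1" by (simp add: fL_def eval_nat_numeral)
  also have "\<dots> \<le> gA y"
  proof -
    have a: "6/5 \<le> 6/5+4*y/5" "4/5 \<le> 1-y" "1 \<le> 1+y^2/3" using assms by auto
    have "(6/5::real) * (4/5) \<le> (6/5+4*y/5) * (1-y)" using a by (intro mult_mono) auto
    then have "(6/5::real) * (4/5) * 1 \<le> (6/5+4*y/5) * (1-y) * (1+y^2/3)" using a assms by (intro mult_mono) auto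
    then have "3/2 * ((6/5::real) * (4/5) * 1) \<le> 3/2 * ((6/5+4*y/5) * (1-y) * (1+y^2/3))"
      by (rule mult_left_mono) simp
    then show ?thesis by (simp only: gA_eq mult.assoc)
  qed
  finally show ?thesis .
qed

lemma poly2_piece: assumes "a \<le> y" "y \<le> b" "0 \<le> a" "fL (32/81) b \<le> gB a"
  shows "fL (32/81) y \<le> gB y"
proof -
  have "fL (32/81) y \<le> fL (32/81) b" using assms by (intro fL_mono) auto
  also have "\<dots> \<le> gB a" by fact
  also have "\<dots> \<le> gB y" using assms by (intro gB_mono) auto
  finally show ?thesis .
qed

lemma poly2: fixes y :: real assumes "1/5 \<le> y" "y \<le> 7/9"
  shows "fL (32/81) y \<le> gB y"
proof -
  have P: "\<And>a b. a \<le> y \<Longrightarrow> y \<le> b \<Longrightarrow> 0 \<le> a \<Longrightarrow> fL (32/81) b \<le> gB a \<Longrightarrow> fL (32/81) y \<le> gB y"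
    by (rule poly2_piece)
  consider "y \<le> 7/25" | "7/25 \<le> y" "y \<le> 9/25" | "9/25 \<le> y" "y \<le> 11/25" | "11/25 \<le> y" "y \<le> 13/25"
    | "13/25 \<le> y" "y \<le> 59/100" | "59/100 \<le> y" "y \<le> 33/50" | "33/50 \<le> y" "y \<le> 71/100"
    | "71/100 \<le> y" "y \<le> 3/4" | "3/4 \<le> y" by linarith
  then show ?thesis
  proof cases
    case 1 then show ?thesis using assms by (intro P[of "1/5" "7/25"]) (auto simp: fL_def gB_def eval_nat_numeral)
  next
    case 2 then show ?thesis by (intro P[of "7/25" "9/25"]) (auto simp: fL_def gB_def eval_nat_numeral)
  next
    case 3 then show ?thesis by (intro P[of "9/25" "11/25"]) (auto simp: fL_def gB_def eval_nat_numeral)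
  next
    case 4 then show ?thesis by (intro P[of "11/25" "13/25"]) (auto simp: fL_def gB_def eval_nat_numeral)
  next
    case 5 then show ?thesis by (intro P[of "13/25" "59/100"]) (auto simp: fL_def gB_def eval_nat_numeral)
  next
    case 6 then show ?thesis by (intro P[of "59/100" "33/50"]) (auto simp: fL_def gB_def eval_nat_numeral)
  next
    case 7 then show ?thesis by (intro P[of "33/50" "71/100"]) (auto simp: fL_def gB_def eval_nat_numeral)
  next
    case 8 then show ?thesis by (intro P[of "71/100" "3/4"]) (auto simp: fL_def gB_def eval_nat_numeral)
  next
    case 9 then show ?thesis using assms by (intro P[of "3/4" "7/9"]) (auto simp: fL_def gB_def eval_nat_numeral)
  qed
qed


lemma frac_cross: fixes a b c d :: real
  assumes "b > 0" "d > 0" "a * d \<le> c * b" shows "a / b \<le> c / d"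
  using assms by (simp add: field_simps)

lemma core_R:
  fixes z :: real assumes z1: "z > 1"
  shows "ln (1 + 1 / (max 1 (z - 1/2) * ln z)) \<le> 3/2 / (z * ln (2*z)) + Ed (6/5) (z - 1)"
proof -
  define s where "s = ln z"
  define M where "M = max 1 (z - 1/2)"
  have sp: "s > 0" using z1 by (simp add: s_def)
  have M1: "M \<ge> 1" by (simp add: M_def)
  have l2z: "ln (2*z) = ln 2 + s" using z1 by (simp add: s_def ln_mult)
  have l2: "ln 2 > (0::real)" by simp
  have l2s: "0 < ln 2 + s" using l2 sp by linarith
  have pz: "0 < z * ln (2*z)" using l2s z1 l2z by simp
  have Edn: "Ed (6/5) (z - 1) \<ge> 0" using z1 by (intro Ed_nonneg) auto
  show ?thesis
  proof (cases "z \<ge> 8")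
    case True
    have "ln (8::real) = 3 * ln 2"
    proof -
      have "ln (8::real) = ln (2^3)" by simp
      also have "\<dots> = real 3 * ln 2" by (rule ln_realpow)
      finally show ?thesis by simp
    qed
    moreover have "ln (8::real) \<le> ln z" using True by simp
    ultimately have s8: "s \<ge> 3 * ln 2" by (simp add: s_def)
    have Meq: "M = z - 1/2" using True by (simp add: M_def)
    have a: "s * (z/2 - 3/4) \<ge> (3 * ln 2) * (z/2 - 3/4)" using s8 True by (intro mult_right_mono) auto
    have b: "ln 2 * (z/2 - 9/4) \<ge> 0" using True l2 by (intro mult_nonneg_nonneg) auto
    have key: "z * (ln 2 + s) \<le> 3/2 * M * s"
    proof -
      have "3/2 * M * s - z * (ln 2 + s) = s * (z/2 - 3/4) - z * ln 2" by (simp add: Meq field_simps)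
      also have "\<dots> \<ge> (3 * ln 2) * (z/2 - 3/4) - z * ln 2" using a by linarith
      finally have "3/2 * M * s - z * (ln 2 + s) \<ge> (3 * ln 2) * (z/2 - 3/4) - z * ln 2" .
      moreover have "(3 * ln 2) * (z/2 - 3/4) - z * ln 2 = ln 2 * (z/2 - 9/4)" by (simp add: algebra_simps)
      ultimately show ?thesis using b by linarith
    qed
    have "0 < ln 2 + s" using l2 sp by linarith
    then have pos1: "0 < z * (ln 2 + s)" using z1 by simp
    have "ln (1 + 1 / (M * s)) \<le> 1 / (M * s)" using M1 sp by (intro ln_add_one_self_le_self) simp
    also have "1 / (M * s) = (3/2) / (3/2 * M * s)" using M1 sp by simp
    also have "\<dots> \<le> (3/2) / (z * (ln 2 + s))"
      using key pos1 M1 sp by (intro divide_left_mono) auto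
    finally show ?thesis using Edn by (simp add: l2z M_def s_def)
  next
    case False
    then have z8: "z < 8" by simp
    define y where "y = (z - 1) / (z + 1)"
    define w where "w = 1 - y"
    have y0: "0 < y" using z1 by (simp add: y_def)
    have y79: "y < 7/9" using z8 z1 by (simp add: y_def divide_less_eq)
    have wp: "w > 0" using y79 by (simp add: w_def)
    have zw: "z = (1 + y) / w"
    proof -
      have "w = 2 / (z + 1)" using z1 by (simp add: w_def y_def field_simps)
      moreover have "1 + y = 2 * z / (z + 1)" using z1 by (simp add: y_def field_simps)
      ultimately show ?thesis using z1 by simp
    qed
    have uw: "z - 1 = 2 * y / w" using zw wp by (simp add: field_simps w_def)
    have ubw: "z - 1 + 6/5 = (6/5 + 4*y/5) / w" using uw wp by (simp add: field_simps w_def)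
    define lo where "lo = 2*y + 2*y^3/3"
    have lo_eq: "lo = 2*y*(1 + y^2/3)" by (simp add: lo_def algebra_simps power3_eq_cube power2_eq_square)
    have y3: "y^3 > 0" "y^5 > 0" using y0 by simp_all
    have lop: "lo > 0" using y0 y3 unfolding lo_def by linarith
    have slo: "lo \<le> s" using ln_series_bounds(1)[OF z1] by (simp add: lo_def s_def y_def)
    have shi: "s \<le> 2*y + 2*y^3/3 + 2*(y^5 / (1 - y^2) / 5)" using ln_series_bounds(2)[OF z1] by (simp add: s_def y_def)
    define c where "c = (if y \<le> 1/5 then 24/25 else 32/81::real)"
    have cp: "c > 0" by (simp add: c_def)
    have c_le: "c \<le> 1 - y^2"
    proof (cases "y \<le> 1/5")
      case True
      have "y^2 \<le> (1/5)^2" using True y0 by (intro power_mono) auto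
      then show ?thesis using True by (simp add: c_def power2_eq_square)
    next
      case False
      have "y^2 \<le> (7/9)^2" using y79 y0 by (intro power_mono) auto
      then show ?thesis using False by (simp add: c_def power2_eq_square)
    qed
    define hi where "hi = 2*y + 2*y^3/3 + 2*(y^5 / c / 5)"
    have shi2: "s \<le> hi"
    proof -
      have "y^5 / (1 - y^2) \<le> y^5 / c" using c_le cp y0 by (intro divide_left_mono) auto
      then have "2*(y^5 / (1 - y^2) / 5) \<le> 2*(y^5 / c / 5)" by (intro mult_left_mono divide_right_mono) auto
      then show ?thesis using shi unfolding hi_def by linarith
    qed
    have Mlo: "M * lo > 0" using M1 lop by simp
    have rho: "ln (1 + 1 / (M * s)) \<le> ln (1 + 1 / (M * lo))"
    proof -
      have "M * lo \<le> M * s" using slo M1 by (intro mult_left_mono) auto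
      then have "1 / (M * s) \<le> 1 / (M * lo)" using Mlo by (intro divide_left_mono) auto
      moreover have "0 < 1 + 1 / (M * s)" using M1 sp by (simp add: add_pos_nonneg)
      ultimately show ?thesis by simp
    qed
    have hpart: "3/2 / (z * (hi + 6932/10000)) \<le> 3/2 / (z * ln (2*z))"
    proof -
      have A: "ln (2*z) \<le> hi + 6932/10000" using l2z shi2 ln2_bounds by linarith
      have C: "z * ln (2*z) \<le> z * (hi + 6932/10000)" using A z1 by (intro mult_left_mono) auto
      have D: "0 < z * (hi + 6932/10000) * (z * ln (2*z))" by (rule mult_pos_pos) (use C pz in linarith)+
      show ?thesis using C D by (intro divide_left_mono) auto
    qed
    define u where "u = z - 1"
    have up: "u > 0" using z1 by (simp add: u_def)
    have lnsub: "ln (1 + (6/5) / u) - ln (1 + 1 / (M * lo)) \<ge> 1 - (1 + 1 / (M * lo)) / (1 + (6/5) / u)"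
      by (rule ln_sub_ge) (use up Mlo in \<open>auto intro: add_pos_nonneg\<close>)
    have ident: "1 - (1 + 1 / (M * lo)) / (1 + (6/5) / u) - (6/5) / (u + 6/5) = - (u / ((u + 6/5) * (M * lo)))"
    proof -
      define P where "P = M * lo"
      define Q where "Q = u + 6/5"
      have Pp: "P > 0" and Qp: "Q > 0" using Mlo up by (simp_all add: P_def Q_def)
      have e1: "1 + 1 / P = (P + 1) / P" using Pp by (simp add: field_simps)
      have e2: "1 + (6/5) / u = Q / u" using up by (simp add: Q_def field_simps)
      have e3: "(6/5) / Q = 1 - u / Q" using Qp by (simp add: Q_def field_simps)
      have "1 - ((P + 1) / P) / (Q / u) - (1 - u / Q) = - (u / (Q * P))"
        using Pp Qp up by (simp add: field_simps)
      then show ?thesis unfolding P_def[symmetric] Q_def[symmetric] e1 e2 e3 .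
    qed
    have main: "u / ((u + 6/5) * (M * lo)) \<le> 3/2 / (z * (hi + 6932/10000))"
    proof -
      have "y^5 / c / 5 \<ge> 0" using y3 cp by simp
      then have hip: "hi + 6932/10000 > 0" using y0 y3 unfolding hi_def by linarith
      have fLeq: "fL c y = (1 + y) * (hi + 6932/10000)" by (simp add: fL_def hi_def)
      have uy: "u = 2*y/w" using uw u_def by simp
      have uz: "u * z = 2*y*(1+y)/w^2"
        unfolding uy by (subst zw) (simp add: power2_eq_square)
      have L: "u * z * (hi + 6932/10000) = (2*y / w^2) * fL c y"
        unfolding fLeq uz by simp
      have R: "3/2 * ((u + 6/5) * (M * lo)) = (2*y / w^2) * (if y \<le> 1/5 then gA y else gB y)"
      proof -
        define A where "A = 6/5 + 4*y/5"
        define B where "B = 1 + y^2/3"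
        have ub: "u + 6/5 = A / w" using ubw by (simp add: u_def A_def)
        have lob: "lo = 2*y*B" using lo_eq by (simp add: B_def)
        show ?thesis
        proof (cases "y \<le> 1/5")
          case True
          have "z \<le> 3/2" using True z1 by (simp add: y_def divide_le_eq)
          then have M: "M = 1" by (simp add: M_def)
          have g: "gA y = 3/2 * A * w * B" by (simp add: gA_def A_def B_def w_def)
          show ?thesis using True unfolding ub lob M g using wp by (simp add: power2_eq_square field_simps)
        next
          case False
          have "z \<ge> 3/2" using False z1 by (simp add: y_def le_divide_eq)
          then have "M = z - 1/2" by (simp add: M_def)
          moreover have "z - 1/2 = (1 + 3*y) / (2*w)" using zw wp by (simp add: field_simps w_def)
          ultimately have M: "M = (1 + 3*y) / (2*w)" by simp
          have g: "gB y = 3/4 * A * (1 + 3*y) * B" by (simp add: gB_def A_def B_def)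
          show ?thesis using False unfolding ub lob M g using wp by (simp add: power2_eq_square field_simps)
        qed
      qed
      have poly: "fL c y \<le> (if y \<le> 1/5 then gA y else gB y)"
        using poly1[of y] poly2[of y] y0 y79 by (simp add: c_def)
      have "u * z * (hi + 6932/10000) \<le> 3/2 * ((u + 6/5) * (M * lo))"
        unfolding L R using poly wp y0 by (intro mult_left_mono) auto
      moreover have "0 < (u + 6/5) * (M * lo)" using up Mlo by simp
      moreover have "0 < z * (hi + 6932/10000)" using z1 hip by simp
      ultimately show ?thesis by (intro frac_cross) (auto simp: algebra_simps)
    qed
    have Ed_eq: "Ed (6/5) (z - 1) = ln (1 + (6/5) / u) - (6/5) / (u + 6/5)" by (simp add: Ed_def u_def)
    show ?thesis
      using rho hpart lnsub ident main Ed_eq by (simp add: M_def s_def)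
  qed
qed


definition Hf :: "real \<Rightarrow> real" where "Hf x = 3/2 * ln (ln (2*x)) + 1/10 + Ef (6/5) (x - 1)"
definition hf :: "real \<Rightarrow> real" where "hf z = 3/2 / (z * ln (2*z)) + Ed (6/5) (z - 1)"

lemma J_eq: assumes "a \<ge> 1"
  shows "Hf a - (a - 1) * hf a = 3/2 * ln (ln (2*a)) + 1/10 - 3/2 * (a - 1) / (a * ln (2*a)) + (6/5) * (a - 1) / (a - 1 + 6/5)"
proof (cases "a = 1")
  case True then show ?thesis by (simp add: Hf_def)
next
  case False
  then have u: "a - 1 > 0" using assms by simp
  have "Ef (6/5) (a - 1) - (a - 1) * Ed (6/5) (a - 1) = (a - 1) * ((6/5) / (a - 1 + 6/5))"
    by (simp add: Ef_def Ed_def algebra_simps)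
  then show ?thesis by (simp add: Hf_def hf_def algebra_simps)
qed

lemma core_N:
  fixes a :: real assumes a1: "a \<ge> 1"
  shows "ln (1 + ln (3/2 * a)) - 1 + 1/12 \<le> Hf a - (a - 1) * hf a"
proof -
  define M where "M = ln (2*a)"
  have Mp: "M > 0" using a1 by (simp add: M_def)
  have Mge: "M \<ge> ln 2" using a1 by (simp add: M_def)
  have J: "Hf a - (a - 1) * hf a = 3/2 * ln M + 1/10 - 3/2 * (a - 1) / (a * M) + (6/5) * (a - 1) / (a - 1 + 6/5)"
    using J_eq[OF a1] by (simp add: M_def)
  show ?thesis
  proof (cases "a \<le> 3/2")
    case True
    have lnMa: "ln M - ln (ln 2) \<ge> (M - ln 2) / M" by (rule ln_diff_ge) (use Mge in auto)
    have Ml: "M - ln 2 = ln a" using a1 by (simp add: M_def ln_mult)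
    have la: "ln a \<ge> (a - 1) / a" using ln_diff_ge[of 1 a] a1 by simp
    have t1: "3/2 * ln M \<ge> 3/2 * ln (ln 2) + 3/2 * (a - 1) / (a * M)"
    proof -
      have "(a - 1) / a / M \<le> ln a / M" using la Mp by (intro divide_right_mono) auto
      then have "(a - 1) / (a * M) \<le> (M - ln 2) / M" using Ml by simp
      then show ?thesis using lnMa by linarith
    qed
    have P: "ln (3/2 * a) = ln (3/2) + ln a" using a1 by (subst ln_mult_pos) auto
    have t2: "ln (1 + ln (3/2 * a)) - ln (1 + ln (3/2)) \<le> ln a / (1 + ln (3/2))"
    proof -
      have "ln (1 + ln (3/2 * a)) - ln (1 + ln (3/2)) \<le> ((1 + ln (3/2 * a)) - (1 + ln (3/2))) / (1 + ln (3/2))"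
        by (rule ln_diff_le) (use P a1 ln15_bounds in auto)
      then show ?thesis using P by simp
    qed
    have la2: "ln a \<le> a - 1" using a1 ln_le_minus_one[of a] by simp
    have t3: "ln a / (1 + ln (3/2)) \<le> (a - 1) * (10000/14054)"
    proof -
      have "ln a / (1 + ln (3/2)) \<le> (a - 1) / (1 + ln (3/2))" using la2 ln15_bounds by (intro divide_right_mono) auto
      also have "\<dots> \<le> (a - 1) / (14054/10000)" using a1 ln15_bounds by (intro divide_left_mono) auto
      finally show ?thesis by simp
    qed
    have t4: "(6/5) * (a - 1) / (a - 1 + 6/5) \<ge> (a - 1) * (12/17)"
    proof -
      have "(a - 1) * (12/17) = (6/5) * (a - 1) / (17/10)" by simp
      also have "\<dots> \<le> (6/5) * (a - 1) / (a - 1 + 6/5)" using a1 True by (intro divide_left_mono) auto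
      finally show ?thesis .
    qed
    have t5: "(a - 1) * (12/17) - (a - 1) * (10000/14054) \<ge> - (1/100)"
    proof -
      have "(a - 1) * (12/17) - (a - 1) * (10000/14054) = (a - 1) * (12/17 - 10000/14054)" by (rule right_diff_distrib[symmetric])
      also have "\<dots> \<ge> (1/2) * (12/17 - 10000/14054)" using a1 True by (intro mult_right_mono_neg) auto
      finally show ?thesis by simp
    qed
    show ?thesis using J t1 t2 t3 t4 t5 lnln2_lower ln_1_ln15_upper by linarith
  next
    case False
    then have a32: "a \<ge> 3/2" by simp
    have Mge3: "M \<ge> ln 3" using a32 by (simp add: M_def)
    have ln3p: "ln 3 > (0::real)" by simp
    have q1: "ln (3/2 * a) \<le> ln (2 * a)" using a1 by (intro ln_mono) auto
    have q2: "ln (3/2 * a) \<ge> 0" using a1 by (intro ln_ge_zero) auto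
    have u1: "ln (1 + ln (3/2 * a)) \<le> ln (1 + M)" unfolding M_def using q1 q2 by (intro ln_mono) auto
    have mono: "ln (1 + M) - ln (1 + ln 3) \<le> ln M - ln (ln 3)"
    proof -
      have p: "0 < 1 + ln (3::real)" using ln3p by linarith
      have q: "0 < 1 + M" using Mp by linarith
      have "(1 + M) * ln 3 \<le> M * (1 + ln 3)" using Mge3 by (simp add: algebra_simps)
      then have le: "(1 + M) / (1 + ln 3) \<le> M / ln 3" using frac_cross[OF p ln3p] by blast
      have pos: "0 < (1 + M) / (1 + ln 3)" by (rule divide_pos_pos[OF q p])
      have "ln ((1 + M) / (1 + ln 3)) \<le> ln (M / ln 3)" by (rule ln_mono[OF le pos])
      moreover have "ln ((1 + M) / (1 + ln 3)) = ln (1 + M) - ln (1 + ln 3)" using p q by (simp add: ln_div)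
      moreover have "ln (M / ln 3) = ln M - ln (ln 3)" using Mp ln3p by (simp add: ln_div)
      ultimately show ?thesis by simp
    qed
    have lM: "ln M \<ge> ln (ln 3)" by (rule ln_mono[OF Mge3 ln3p])
    have t2: "(6/5) * (a - 1) / (a - 1 + 6/5) - 3/2 * (a - 1) / (a * M) \<ge> 18/17 - 15000/10986"
    proof -
      have e: "(6/5) * (a - 1) / (a - 1 + 6/5) - 3/2 * (a - 1) / (a * M) = (a - 1) / a * ((6/5) * a / (a - 1 + 6/5) - 3/2 / M)"
      proof -
        define d where "d = a - 1 + 6/5"
        have dp: "d > 0" using a1 by (simp add: d_def)
        have "(6/5) * (a - 1) / d - 3/2 * (a - 1) / (a * M) = (a - 1) / a * ((6/5) * a / d - 3/2 / M)"
          using a1 Mp dp by (simp add: field_simps)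
        then show ?thesis by (simp add: d_def)
      qed
      have b1: "(6/5) * a / (a - 1 + 6/5) \<ge> 18/17"
      proof -
        have "(18/17) * (a - 1 + 6/5) \<le> (6/5) * a" using a32 by simp
        then show ?thesis using a1 by (simp add: le_divide_eq)
      qed
      have b2: "3/2 / M \<le> 15000/10986"
      proof -
        have "3/2 / M \<le> 3/2 / (10986/10000)" using Mge3 ln3_bounds by (intro divide_left_mono) auto
        then show ?thesis by simp
      qed
      have br: "(6/5) * a / (a - 1 + 6/5) - 3/2 / M \<ge> 18/17 - 15000/10986" using b1 b2 by linarith
      have fr: "0 \<le> (a - 1) / a" "(a - 1) / a \<le> 1" using a1 by auto
      show ?thesis
      proof (cases "(6/5) * a / (a - 1 + 6/5) - 3/2 / M \<ge> 0")
        case True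
        have "(a - 1) / a * ((6/5) * a / (a - 1 + 6/5) - 3/2 / M) \<ge> 0" by (rule mult_nonneg_nonneg[OF fr(1) True])
        then show ?thesis using e by simp
      next
        case False
        have "(a - 1) / a * ((6/5) * a / (a - 1 + 6/5) - 3/2 / M) \<ge> 1 * ((6/5) * a / (a - 1 + 6/5) - 3/2 / M)"
          using False fr by (intro mult_right_mono_neg) auto
        then show ?thesis using e br by simp
      qed
    qed
    show ?thesis using J u1 mono lM t2 lnln3_lower ln_1_ln3_upper by linarith
  qed
qed


definition S1 :: "nat \<Rightarrow> real" where
  "S1 t = (\<Sum>s\<in>{1..<t}. ln (1 + 1 / (real s * ln (real s + 1))))"

lemma S1_Suc: "t \<ge> 1 \<Longrightarrow> S1 (Suc t) = S1 t + ln (1 + 1 / (real t * ln (real t + 1)))"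
  unfolding S1_def by (simp add: sum.atLeastLessThan_Suc)

lemma S1_one: "S1 1 = 0" by (simp add: S1_def)

lemma S1_incr:
  fixes t :: real assumes t3: "t \<ge> 3"
  shows "ln (1 + 1 / (t * ln (t + 1))) \<le> 3/2 * (ln (ln (t + 2)) - ln (ln (t + 1)))"
proof -
  define L where "L = ln (t + 1)"
  have Lp: "L > 0" using t3 by (simp add: L_def)
  define \<delta> where "\<delta> = (ln (t + 2) - ln (t + 1)) / L"
  have d1: "ln (t + 2) - ln (t + 1) = ln (1 + 1 / (t + 1))"
  proof -
    have e: "1 + 1 / (t + 1) = (t + 2) / (t + 1)" using t3 by (simp add: field_simps)
    have "t + 2 > 0" "t + 1 > 0" using t3 by auto
    then show ?thesis unfolding e by (simp add: ln_div)
  qed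
  have d2: "ln (1 + 1 / (t + 1)) \<ge> 2 * (1 / (t + 1)) / (2 + 1 / (t + 1))" using t3 by (intro ln1p_ge) simp
  have d3: "2 * (1 / (t + 1)) / (2 + 1 / (t + 1)) = 2 / (2*t + 3)"
  proof -
    define q where "q = t + 1"
    have qp: "q > 0" using t3 by (simp add: q_def)
    have "2 * (1 / q) / (2 + 1 / q) = 2 / (2*q + 1)" using qp by (simp add: field_simps)
    moreover have "2*q + 1 = 2*t + 3" by (simp add: q_def)
    ultimately show ?thesis by (simp add: q_def)
  qed
  have dlow: "\<delta> \<ge> 2 / (2*t + 3) / L" unfolding \<delta>_def using d1 d2 d3 Lp by (intro divide_right_mono) auto
  have dp: "\<delta> \<ge> 0" using dlow t3 Lp by (smt (verit) divide_nonneg_pos)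
  have lnlnd: "ln (ln (t + 2)) - ln (ln (t + 1)) = ln (1 + \<delta>)"
  proof -
    have "ln (t + 2) = L * (1 + \<delta>)" unfolding \<delta>_def using Lp by (simp add: field_simps L_def)
    moreover have "1 + \<delta> > 0" using dp by simp
    ultimately show ?thesis using Lp by (simp add: ln_mult L_def)
  qed
  have cube: "(1 + 3/2 * \<delta>)^2 \<le> (1 + \<delta>)^3"
  proof -
    have "(1 + \<delta>)^3 - (1 + 3/2 * \<delta>)^2 = \<delta>^2 * (3/4 + \<delta>)"
      by (simp add: power2_eq_square power3_eq_cube algebra_simps)
    moreover have "\<delta>^2 * (3/4 + \<delta>) \<ge> 0" using dp by simp
    ultimately show ?thesis by simp
  qed
  have lncube: "2 * ln (1 + 3/2 * \<delta>) \<le> 3 * ln (1 + \<delta>)"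
  proof -
    have "ln ((1 + 3/2 * \<delta>)^2) \<le> ln ((1 + \<delta>)^3)" using cube dp by (intro ln_mono) auto
    then show ?thesis by (simp add: ln_realpow)
  qed
  have c1: "1 / (t * L) \<le> 3/2 * \<delta>"
  proof -
    have "1 / (t * L) \<le> 3 / (2*t + 3) / L"
    proof -
      have "1 / t \<le> 3 / (2*t + 3)" using t3 by (simp add: field_simps)
      then have "1 / t / L \<le> 3 / (2*t + 3) / L" using Lp by (intro divide_right_mono) auto
      then show ?thesis by simp
    qed
    also have "\<dots> = 3/2 * (2 / (2*t + 3) / L)" by simp
    also have "\<dots> \<le> 3/2 * \<delta>" using dlow by simp
    finally show ?thesis .
  qed
  have "ln (1 + 1 / (t * L)) \<le> ln (1 + 3/2 * \<delta>)" using c1 t3 Lp by (intro ln_mono) (auto intro: add_pos_nonneg)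
  then show ?thesis using lncube lnlnd by (simp add: L_def)
qed

lemma S1_bound: "t \<ge> 1 \<Longrightarrow> S1 t \<le> 3/2 * ln (ln (real t + 1)) + 1"
proof (induction t rule: nat_induct_at_least)
  case base
  then show ?case using S1_one lnln2_lower by simp
next
  case (Suc t)
  show ?case
  proof (cases "t \<le> 2")
    case True
    then have "t = 1 \<or> t = 2" using Suc.hyps by auto
    then show ?thesis
    proof
      assume t1: "t = 1"
      have "S1 (Suc t) = ln (1 + 1 / ln 2)" using S1_Suc[of 1] S1_one t1 by simp
      moreover have "ln (ln (real (Suc t) + 1)) = ln (ln 3)" using t1 by simp
      ultimately show ?thesis using ln_1_inv_ln2_upper lnln3_lower by linarith
    next
      assume t2: "t = 2"
      have "S1 (Suc t) = ln (1 + 1 / ln 2) + ln (1 + 1 / (2 * ln 3))"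
        using S1_Suc[of 1] S1_Suc[of 2] S1_one t2 by (simp add: numeral_eq_Suc)
      moreover have "ln (ln (real (Suc t) + 1)) = ln (ln 4)" using t2 by simp
      moreover have "ln (ln (4::real)) = ln 2 + ln (ln 2)"
      proof -
        have "ln (4::real) = 2 * ln 2" using ln_realpow[of 2 2] by simp
        then show ?thesis by (simp add: ln_mult)
      qed
      ultimately show ?thesis using ln_1_inv_ln2_upper ln_1_inv_2ln3_upper lnln2_lower ln2_bounds by linarith
    qed
  next
    case False
    then have t3: "real t \<ge> 3" by simp
    have "S1 (Suc t) = S1 t + ln (1 + 1 / (real t * ln (real t + 1)))" using Suc.hyps by (simp add: S1_Suc)
    also have "\<dots> \<le> 3/2 * ln (ln (real t + 1)) + 1 + 3/2 * (ln (ln (real t + 2)) - ln (ln (real t + 1)))"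
      using Suc.IH S1_incr[OF t3] by linarith
    also have "\<dots> = 3/2 * ln (ln (real (Suc t) + 1)) + 1" by (simp add: algebra_simps)
    finally show ?thesis .
  qed
qed

lemma ln_fact_lower: "m \<ge> 1 \<Longrightarrow> ln (fact m :: real) \<ge> real m * ln (real m) - real m + 1"
proof (induction m rule: nat_induct_at_least)
  case base then show ?case by simp
next
  case (Suc m)
  have mp: "real m > 0" using Suc.hyps by simp
  have d: "ln (real m + 1) - ln (real m) \<le> 1 / real m"
    using ln_diff_le[of "real m" "real m + 1"] mp by simp
  have d2: "real m * (ln (real m + 1) - ln (real m)) \<le> 1"
    using d mp by (simp add: field_simps)
  have "ln (fact (Suc m) :: real) = ln (real m + 1) + ln (fact m)"
    by (simp add: ln_mult add.commute)
  then show ?case using Suc.IH d2 by (simp add: algebra_simps)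
qed


definition Psi :: "nat \<Rightarrow> nat \<Rightarrow> real" where
  "Psi k t = (if k = 1 then 1/12 + S1 t
              else - ln (fact (k - 1) :: real) + real k * Hf (real t / real k) + 3/2)"

lemma Hf_incr_lo:
  assumes "1 \<le> x1" "x1 < x2"
  shows "Hf x2 - Hf x1 \<ge> (x2 - x1) * hf x2"
proof -
  define Q where "Q = (x2 - x1) / (x2 * ln (2*x2))"
  have a: "ln (ln (2*x2)) - ln (ln (2*x1)) \<ge> Q"
    using lnln_lo assms unfolding Q_def by auto
  have b0: "Ef (6/5) (x2 - 1) - Ef (6/5) (x1 - 1) \<ge> ((x2 - 1) - (x1 - 1)) * Ed (6/5) (x2 - 1)"
    using assms by (intro E_conc_lo) auto
  have b: "Ef (6/5) (x2 - 1) - Ef (6/5) (x1 - 1) \<ge> (x2 - x1) * Ed (6/5) (x2 - 1)"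
    using b0 by simp
  have e1: "(x2 - x1) * (3/2 / (x2 * ln (2*x2))) = 3/2 * Q" unfolding Q_def by (simp add: ac_simps)
  have e: "(x2 - x1) * hf x2 = 3/2 * Q + (x2 - x1) * Ed (6/5) (x2 - 1)"
    unfolding hf_def distrib_left e1 by simp
  have h: "Hf x2 - Hf x1 = 3/2 * (ln (ln (2*x2)) - ln (ln (2*x1))) + (Ef (6/5) (x2 - 1) - Ef (6/5) (x1 - 1))"
    by (simp add: Hf_def algebra_simps)
  define P where "P = (x2 - x1) * Ed (6/5) (x2 - 1)"
  define R where "R = (x2 - x1) * hf x2"
  define D where "D = ln (ln (2*x2)) - ln (ln (2*x1))"
  define E where "E = Ef (6/5) (x2 - 1) - Ef (6/5) (x1 - 1)"
  have "R = 3/2 * Q + P" "Hf x2 - Hf x1 = 3/2 * D + E" "Q \<le> D" "P \<le> E"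
    using a b e h unfolding P_def R_def D_def E_def by auto
  then have "R \<le> Hf x2 - Hf x1" by linarith
  then show ?thesis by (simp add: R_def)
qed

lemma Hf_incr_hi:
  assumes "1 < a" "a \<le> x"
  shows "Hf x - Hf a \<le> (x - a) * hf a"
proof -
  define Q where "Q = (x - a) / (a * ln (2*a))"
  have a: "ln (ln (2*x)) - ln (ln (2*a)) \<le> Q"
    using lnln_hi assms unfolding Q_def by auto
  have b0: "Ef (6/5) (x - 1) - Ef (6/5) (a - 1) \<le> ((x - 1) - (a - 1)) * Ed (6/5) (a - 1)"
    using assms by (intro E_conc_hi) auto
  have b: "Ef (6/5) (x - 1) - Ef (6/5) (a - 1) \<le> (x - a) * Ed (6/5) (a - 1)"
    using b0 by simp
  have e1: "(x - a) * (3/2 / (a * ln (2*a))) = 3/2 * Q" unfolding Q_def by (simp add: ac_simps)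
  have e: "(x - a) * hf a = 3/2 * Q + (x - a) * Ed (6/5) (a - 1)"
    unfolding hf_def distrib_left e1 by simp
  have h: "Hf x - Hf a = 3/2 * (ln (ln (2*x)) - ln (ln (2*a))) + (Ef (6/5) (x - 1) - Ef (6/5) (a - 1))"
    by (simp add: Hf_def algebra_simps)
  define P where "P = (x - a) * Ed (6/5) (a - 1)"
  define R where "R = (x - a) * hf a"
  define D where "D = ln (ln (2*x)) - ln (ln (2*a))"
  define E where "E = Ef (6/5) (x - 1) - Ef (6/5) (a - 1)"
  have "R = 3/2 * Q + P" "Hf x - Hf a = 3/2 * D + E" "D \<le> Q" "E \<le> P"
    using a b e h unfolding P_def R_def D_def E_def by auto
  then have "Hf x - Hf a \<le> R" by linarith
  then show ?thesis by (simp add: R_def)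
qed

lemma R_k2:
  fixes k t :: nat assumes k2: "2 \<le> k" and kt: "k \<le> t"
  shows "ln (1 + real k / (real t * ln ((real t + 1) / real k))) \<le> real k * (Hf ((real t + 1) / real k) - Hf (real t / real k))"
proof -
  define z where "z = (real t + 1) / real k"
  define x where "x = real t / real k"
  have kp: "real k > 0" using k2 by simp
  have x1: "x \<ge> 1" using kt kp by (simp add: x_def)
  have zx: "z - x = 1 / real k" unfolding z_def x_def diff_divide_distrib[symmetric] by simp
  have "1 / real k > 0" using kp by simp
  then have xz: "x < z" using zx by linarith
  have z1: "z > 1" using x1 xz by simp
  have "Hf z - Hf x \<ge> (z - x) * hf z" by (rule Hf_incr_lo[OF x1 xz])
  then have "real k * (Hf z - Hf x) \<ge> real k * ((z - x) * hf z)" using kp by (intro mult_left_mono) auto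
  moreover have "real k * ((z - x) * hf z) = hf z" using zx kp by simp
  ultimately have A: "real k * (Hf z - Hf x) \<ge> hf z" by simp
  have B: "hf z \<ge> ln (1 + 1 / (max 1 (z - 1/2) * ln z))" using core_R[OF z1] by (simp add: hf_def)
  define M where "M = max 1 (z - 1/2)"
  have lz: "ln z > 0" using z1 by simp
  have M1: "M \<ge> 1" by (simp add: M_def)
  have kM: "real k * M \<le> real t"
  proof -
    have "real k * 1 \<le> real t" using kt by simp
    moreover have "real k * (z - 1/2) \<le> real t"
    proof -
      have "real k * (z - 1/2) = real t + 1 - real k / 2" using kp by (simp add: z_def field_simps)
      then show ?thesis using k2 by simp
    qed
    ultimately show ?thesis by (simp add: M_def max_def)
  qed
  have C: "real k / (real t * ln z) \<le> 1 / (M * ln z)"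
  proof -
    have tp: "real t > 0" using kt k2 by simp
    have "real k * (M * ln z) \<le> 1 * (real t * ln z)" using kM lz by (simp add: mult.assoc[symmetric])
    then show ?thesis using tp lz M1 by (intro frac_cross) auto
  qed
  have D: "ln (1 + real k / (real t * ln z)) \<le> ln (1 + 1 / (M * ln z))"
  proof -
    have "0 < 1 + real k / (real t * ln z)" using kp lz kt k2 by (simp add: add_pos_nonneg)
    then show ?thesis using C by simp
  qed
  show ?thesis using A B D by (simp add: M_def z_def x_def)
qed


lemma ln_fact_step: "k \<ge> 1 \<Longrightarrow> ln (fact k :: real) = ln (real k) + ln (fact (k - 1) :: real)"
proof -
  assume k: "k \<ge> 1"
  have "(fact k :: real) = real k * fact (k - 1)" using k by (simp add: fact_reduce)
  moreover have "real k > 0" "(fact (k - 1) :: real) > 0" using k by auto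
  ultimately show ?thesis by (simp add: ln_mult)
qed

lemma N_k2:
  fixes k t :: nat assumes k2: "2 \<le> k" and kt: "k \<le> t"
  shows "ln (1 / real t + ln ((real t + 1) / real k) / real k) - 1 + 1/12 \<le> Psi (k+1) (t+1) - Psi k t"
proof -
  have kp: "real k > 0" and tp: "real t > 0" using k2 kt by auto
  define a where "a = (real t + 1) / (real k + 1)"
  define x where "x = real t / real k"
  have a1: "a \<ge> 1" using kt by (simp add: a_def)
  have xa: "a \<le> x"
  proof -
    have "(real t + 1) * real k \<le> real t * (real k + 1)" using kt by (simp add: algebra_simps)
    then show ?thesis unfolding a_def x_def using kp by (intro frac_cross) auto
  qed
  have kxa: "real k * (x - a) = a - 1"
  proof -
    define K1 where "K1 = real k + 1"
    have K1p: "K1 > 0" by (simp add: K1_def)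
    have "real k * (real t / real k - (real t + 1) / K1) = real t - real k * (real t + 1) / K1"
      using kp by (simp add: right_diff_distrib)
    also have "\<dots> = (real t * K1 - real k * (real t + 1)) / K1" using K1p by (simp add: field_simps)
    also have "real t * K1 - real k * (real t + 1) = real t + 1 - K1" by (simp add: K1_def algebra_simps)
    also have "(real t + 1 - K1) / K1 = (real t + 1) / K1 - 1" using K1p by (simp add: field_simps)
    finally have "real k * (real t / real k - (real t + 1) / K1) = (real t + 1) / K1 - 1" .
    then show ?thesis by (simp add: x_def a_def K1_def)
  qed
  have key: "(real k + 1) * Hf a - real k * Hf x \<ge> Hf a - (a - 1) * hf a"
  proof (cases "a = 1")
    case True
    then have "x = a" using kxa kp by simp
    then show ?thesis using True by (simp add: algebra_simps)
  next
    case False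
    then have a1': "a > 1" using a1 by simp
    have "Hf x - Hf a \<le> (x - a) * hf a" by (rule Hf_incr_hi[OF a1' xa])
    then have "real k * (Hf x - Hf a) \<le> real k * ((x - a) * hf a)" using kp by (intro mult_left_mono) auto
    also have "real k * ((x - a) * hf a) = (a - 1) * hf a" using kxa by (simp add: mult.assoc[symmetric])
    finally have "real k * (Hf x - Hf a) \<le> (a - 1) * hf a" .
    then show ?thesis by (simp add: algebra_simps)
  qed
  have cN: "ln (1 + ln (3/2 * a)) - 1 + 1/12 \<le> Hf a - (a - 1) * hf a" by (rule core_N[OF a1])
  define L where "L = ln ((real t + 1) / real k)"
  have "1 \<le> (real t + 1) / real k" using kt kp by simp
  then have L0: "L \<ge> 0" unfolding L_def by (rule ln_ge_zero)
  have Lle: "L \<le> ln (3/2 * a)"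
  proof -
    have "(real t + 1) / real k \<le> 3/2 * a"
    proof -
      have "(real t + 1) * 2 \<le> (real t + 1) * real k" using k2 by (intro mult_left_mono) auto
      then have "(real t + 1) * (2 * (real k + 1)) \<le> (3 * (real t + 1)) * real k" by (simp add: algebra_simps)
      then have "(real t + 1) / real k \<le> (3 * (real t + 1)) / (2 * (real k + 1))" using kp by (intro frac_cross) auto
      then show ?thesis by (simp add: a_def)
    qed
    moreover have "(real t + 1) / real k > 0" using kp by simp
    ultimately show ?thesis unfolding L_def by (rule ln_mono)
  qed
  have kt1: "real k / real t \<le> 1" using kt tp by simp
  have s1: "1 / real t + L / real k = (real k / real t + L) / real k" using kp tp by (simp add: field_simps)
  have s2: "real k / real t + L > 0" using kp tp L0 by (simp add: add_pos_nonneg)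
  have lhs: "ln (1 / real t + L / real k) = ln (real k / real t + L) - ln (real k)"
    using s1 s2 kp by (simp add: ln_div)
  have lhs2: "ln (real k / real t + L) \<le> ln (1 + ln (3/2 * a))"
    using s2 kt1 Lle by (intro ln_mono) auto
  have psi: "Psi (k+1) (t+1) - Psi k t = - ln (real k) + ((real k + 1) * Hf a - real k * Hf x)"
  proof -
    have "Psi (k+1) (t+1) = - ln (fact k :: real) + (real k + 1) * Hf a + 3/2"
      using k2 by (simp add: Psi_def a_def add.commute)
    moreover have "Psi k t = - ln (fact (k - 1) :: real) + real k * Hf x + 3/2"
      using k2 by (simp add: Psi_def x_def)
    moreover have "ln (fact k :: real) = ln (real k) + ln (fact (k - 1) :: real)" using k2 by (intro ln_fact_step) auto
    ultimately show ?thesis by simp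
  qed
  show ?thesis using lhs lhs2 psi key cN by (simp add: L_def)
qed


lemma T1:
  fixes t :: nat assumes t1: "1 \<le> t"
  shows "ln (1 / real t + ln ((real t + 1) / real (1::nat)) / real (1::nat)) - 1 + 1/12 \<le> Psi (1+1) (t+1) - Psi 1 t"
proof -
  define L where "L = ln (real t + 1)"
  have L23: "L \<ge> 2/3"
  proof -
    have "ln 2 \<le> L" using t1 by (simp add: L_def)
    then show ?thesis using ln2_bounds by linarith
  qed
  have Lp: "L > 0" using L23 by simp
  have H: "Hf ((real t + 1) / 2) \<ge> 3/2 * ln L + 1/10"
  proof -
    have "Ef (6/5) ((real t + 1) / 2 - 1) \<ge> 0" using t1 by (intro Ef_nonneg) auto
    moreover have "ln (2 * ((real t + 1) / 2)) = L" by (simp add: L_def)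
    ultimately show ?thesis by (simp add: Hf_def)
  qed
  have P2: "Psi (1+1) (t+1) = 2 * Hf ((real t + 1) / 2) + 3/2"
    by (simp add: Psi_def add.commute)
  have P1: "Psi 1 t \<le> 1/12 + 3/2 * ln L + 1" using S1_bound[OF t1] by (simp add: Psi_def L_def)
  have a: "ln (1 / real t + L) \<le> ln (1 + L)"
    using t1 Lp by (intro ln_mono) (auto simp: add_pos_nonneg)
  have b: "ln (1 + L) - ln L \<le> ln 2 + 1/4"
  proof -
    have "(1 + L) / L \<le> 5/2" using L23 Lp by (simp add: field_simps)
    then have "ln ((1 + L) / L) \<le> ln (5/2)" using Lp by (intro ln_mono) auto
    moreover have "ln (5/2::real) = ln 2 + ln (5/4)"
    proof -
      have "ln (2 * (5/4::real)) = ln 2 + ln (5/4)" by (rule ln_mult_pos) auto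
      moreover have "2 * (5/4::real) = 5/2" by simp
      ultimately show ?thesis by simp
    qed
    moreover have "ln (5/4::real) \<le> 1/4" using ln_le_minus_one[of "5/4"] by simp
    moreover have "ln ((1 + L) / L) = ln (1 + L) - ln L" using Lp by (simp add: ln_div)
    ultimately show ?thesis by linarith
  qed
  have c: "ln L \<ge> - 1/2"
  proof -
    have "ln L - ln 1 \<ge> 1 - 1 / L" by (rule ln_sub_ge) (use Lp in auto)
    moreover have "1 / L \<le> 3/2" using L23 Lp by (simp add: field_simps)
    ultimately show ?thesis by simp
  qed
  have lhs: "ln (1 / real t + ln ((real t + 1) / real (1::nat)) / real (1::nat)) = ln (1 / real t + L)"
    by (simp add: L_def)
  show ?thesis unfolding lhs using a b c H P1 P2 ln2_bounds by linarith
qed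

lemma psi_rep:
  fixes k t :: nat assumes "1 \<le> k" "k \<le> t"
  shows "ln (1 + real k / (real t * ln ((real t + 1) / real k))) \<le> Psi k (t+1) - Psi k t"
proof (cases "k = 1")
  case True
  then have t1: "t \<ge> 1" using assms by simp
  have "Psi k (t+1) - Psi k t = ln (1 + 1 / (real t * ln (real t + 1)))"
    using True S1_Suc[OF t1] by (simp add: Psi_def)
  then show ?thesis using True by simp
next
  case False
  then have k2: "2 \<le> k" using assms by simp
  have "Psi k (t+1) - Psi k t = real k * (Hf ((real t + 1) / real k) - Hf (real t / real k))"
    using k2 by (simp add: Psi_def algebra_simps add.commute)
  then show ?thesis using R_k2[OF k2 assms(2)] by simp
qed

lemma psi_new:
  fixes k t :: nat assumes "1 \<le> k" "k \<le> t"
  shows "ln (1 / real t + ln ((real t + 1) / real k) / real k) - 1 + 1/12 \<le> Psi (k+1) (t+1) - Psi k t"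
proof (cases "k = 1")
  case True
  then show ?thesis using T1[of t] assms by simp
next
  case False
  then have k2: "2 \<le> k" using assms by simp
  show ?thesis by (rule N_k2[OF k2 assms(2)])
qed

lemma psi_init: "1/12 \<le> Psi 1 1" by (simp add: Psi_def S1_def)

lemma psi_final:
  fixes m n :: nat assumes m1: "1 \<le> m" and mn: "m \<le> n"
  shows "Psi m n \<le> - (real m - 1) * ln (real m) + 3 / 2 * real m * ln (ln (2 * real n / real m))
           + 2.33 * real m + 0.86"
proof (cases "m = 1")
  case True
  then have n1: "n \<ge> 1" using mn by simp
  have "ln (ln (real n + 1)) \<le> ln (ln (2 * real n))"
  proof -
    have "ln (real n + 1) \<le> ln (2 * real n)" using n1 by (intro ln_mono) auto
    moreover have "ln (real n + 1) > 0" using n1 by simp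
    ultimately show ?thesis by (rule ln_mono)
  qed
  then show ?thesis using True S1_bound[OF n1] by (simp add: Psi_def)
next
  case False
  then have m2: "m \<ge> 2" using m1 by simp
  have mp: "real m > 0" using m2 by simp
  define x where "x = real n / real m"
  have x1: "x \<ge> 1" using mn mp by (simp add: x_def)
  have Hx: "Hf x \<le> 3/2 * ln (ln (2 * x)) + 1/10 + 6/5"
    using Ef_le[of "6/5" "x - 1"] x1 by (simp add: Hf_def)
  have mH: "real m * Hf x \<le> real m * (3/2 * ln (ln (2 * x)) + 1/10 + 6/5)"
    using Hx mp by (intro mult_left_mono) auto
  have lf: "ln (fact (m - 1) :: real) \<ge> (real m - 1) * ln (real m) - real m + 1"
  proof -
    have "ln (fact m :: real) = ln (real m) + ln (fact (m - 1) :: real)" using m1 by (rule ln_fact_step)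
    moreover have "ln (fact m :: real) \<ge> real m * ln (real m) - real m + 1" using ln_fact_lower m1 by blast
    ultimately show ?thesis by (simp add: algebra_simps)
  qed
  have P: "Psi m n = - ln (fact (m - 1) :: real) + real m * Hf x + 3/2" using m2 by (simp add: Psi_def x_def)
  have x2: "2 * x = 2 * real n / real m" by (simp add: x_def)
  define LL where "LL = ln (ln (2 * real n / real m))"
  have e1: "real m * (3/2 * ln (ln (2 * x)) + 1/10 + 6/5) = 3/2 * real m * LL + 13/10 * real m"
    unfolding x2 LL_def by (simp add: algebra_simps)
  have e2: "(real m - 1) * ln (real m) = real m * ln (real m) - ln (real m)" by (simp add: algebra_simps)
  have n1: "(2.33::real) = 233/100" "(0.86::real) = 86/100" by simp_all
  have "Psi m n \<le> - (real m - 1) * ln (real m) + 3 / 2 * real m * LL + 233/100 * real m + 86/100"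
    using P mH e1 lf m2 by linarith
  then show ?thesis unfolding LL_def n1 .
qed


theorem mainTheorem7:
  fixes u :: "'a::finite \<Rightarrow> real" and v :: "nat \<Rightarrow> real"
    and c :: "nat \<Rightarrow> real" and b0 :: real and xs :: "'a list"
  assumes u_pos: "\<And>i. u i > 0"
    and v_pos: "\<And>k. v k > 0"
    and w_sum: "\<And>t. t \<le> length xs \<Longrightarrow>
                  (\<Sum>k\<in>UNIV - set (take t xs). wt u v xs t k) \<le> 1"
    and c_range: "\<And>t. t \<ge> 1 \<Longrightarrow> 1 \<le> c t \<and> c t \<le> 2"
    and b0_pos: "b0 > 0"
    and n_pos: "length xs \<ge> 1"
  shows "regret (beta_c b0 c xs) u v xs
           \<le> regret (beta_star b0 xs) u v xs + (real (card (set xs)) - 1) * ln 2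
       \<and> regret (beta_c b0 c xs) u v xs
           \<le> CL u v xs - (real (card (set xs)) - 1) * ln (real (card (set xs)))
             + (\<Sum>j\<in>set xs. ln (real (count_list xs j)) / 2)
             - ln (real (length xs)) / 2
             + 3 / 2 * real (card (set xs))
                 * ln (ln (2 * real (length xs) / real (card (set xs))))
             + 2.33 * real (card (set xs)) + 0.86
             + (real (card (set xs)) - 1) * ln 2"
proof -
  have ne: "xs \<noteq> []" using n_pos by auto
  have P1: "regret (beta_c b0 c xs) u v xs
           \<le> regret (beta_star b0 xs) u v xs + (real (card (set xs)) - 1) * ln 2"
    by (rule part1[OF u_pos v_pos c_range b0_pos ne])
  have F: "regret (beta_star b0 xs) u v xs \<le> CL u v xs
       + (\<Sum>j\<in>set xs. ln (real (count_list xs j)) / 2) - ln (real (length xs)) / 2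
       + Psi (card (set xs)) (length xs)"
  proof (rule framework[where \<alpha> = "1/12"])
    show "\<And>i. u i > 0" by (rule u_pos)
    show "\<And>k. v k > 0" by (rule v_pos)
    show "b0 > 0" by (rule b0_pos)
    show "xs \<noteq> []" by (rule ne)
    show "\<And>c::nat. c \<ge> 1 \<Longrightarrow>
        (real c + 1/2) * (ln (real c + 1) - ln (real c)) \<le> 1 + 1/12 * (1 / real c - 1 / (real c + 1))"
      by (rule robbins) simp
    show "\<And>t::nat. t \<ge> 1 \<Longrightarrow> 1 \<le> (real t + 1/2) * (ln (real t + 1) - ln (real t))"
      by (rule tbound) simp
    show "\<And>k t. 1 \<le> k \<Longrightarrow> k \<le> t \<Longrightarrow>
        ln (1 + real k / (real t * ln ((real t + 1) / real k))) \<le> Psi k (t+1) - Psi k t"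
      by (rule psi_rep)
    show "\<And>k t. 1 \<le> k \<Longrightarrow> k \<le> t \<Longrightarrow>
        ln (1 / real t + ln ((real t + 1) / real k) / real k) - 1 + 1/12 \<le> Psi (k+1) (t+1) - Psi k t"
      by (rule psi_new)
    show "1/12 \<le> Psi 1 1" by (rule psi_init)
    show "(1/12::real) \<ge> 0" by simp
  qed
  have m1: "1 \<le> card (set xs)" using ne by (simp add: Suc_le_eq card_gt_0_iff)
  have mn: "card (set xs) \<le> length xs" by (rule card_length)
  have G: "Psi (card (set xs)) (length xs) \<le> - (real (card (set xs)) - 1) * ln (real (card (set xs)))
      + 3 / 2 * real (card (set xs)) * ln (ln (2 * real (length xs) / real (card (set xs))))
      + 2.33 * real (card (set xs)) + 0.86"
    by (rule psi_final[OF m1 mn])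
  show ?thesis using P1 F G by linarith
qed

end
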